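(* Let $\mathcal{U}$ be an ultrafilter over a set $\mathcal{I}$ and let $\mathcal{A}$ be a $C^{\ast}$-algebra faithfully and non-degenerately represented on $\mathcal{H}$. Embed $\mathcal{A}$ in $\mathcal{A}^{s\mathcal{U}}/J$ via constant families $a\mapsto[(a)_{i\in\mathcal{I}}]$. Then the image of $\mathcal{A}$ is an essential ideal of $\mathcal{A}^{s\mathcal{U}}/J$.
   Context: $\mathcal{A}^{\mathcal{U}}$ is the quotient of the bounded families $\prod_{\mathcal{I}}\mathcal{A}$ by those with $\lim_{\mathcal{U}}\|a_i\|=0$. A family $(a_i)$ is $\mathcal{U}$-strict convergent to $a_{\mathcal{U}}\in B(\mathcal{H})$ if for every $x\in\mathcal{A}$ and $\varepsilon>0$, $\{i:\|a_ix-a_{\mathcal{U}}x\|<\varepsilon,\ \|xa_i-xa_{\mathcal{U}}\|<\varepsilon\}\in\mathcal{U}$. $\mathcal{A}^{s\mathcal{U}}\subset\mathcal{A}^{\mathcal{U}}$ is the $C^{\ast}$-subalgebra of classes that are $\mathcal{U}$-strict convergent to some operator in $B(\mathcal{H})$, and $J\subset\mathcal{A}^{s\mathcal{U}}$ is the closed ideal of classes $\mathcal{U}$-strict convergent to $0$. An ideal $I$ of a $C^{\ast}$-algebra is essential if every nonzero ideal intersects $I$ nontrivially. *)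

theory Defs
  imports "HOL-Analysis.Analysis"
begin

class complex_hilbert = ab_group_add +
  fixes scaleC :: "complex \<Rightarrow> 'a \<Rightarrow> 'a"
    and cinner :: "'a \<Rightarrow> 'a \<Rightarrow> complex"
  assumes scaleC_add_right: "scaleC c (x + y) = scaleC c x + scaleC c y"
    and scaleC_add_left: "scaleC (c + d) x = scaleC c x + scaleC d x"
    and scaleC_scaleC: "scaleC c (scaleC d x) = scaleC (c * d) x"
    and scaleC_one: "scaleC 1 x = x"
    and cinner_add_right: "cinner x (y + z) = cinner x y + cinner x z"
    and cinner_scaleC_right: "cinner x (scaleC c y) = c * cinner x y"
    and cinner_commute: "cinner y x = cnj (cinner x y)"
    and cinner_nonneg: "0 \<le> Re (cinner x x)"
    and cinner_eq_zero: "cinner x x = 0 \<Longrightarrow> x = 0"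
    and hilbert_complete:
      "(\<forall>e>0. \<exists>N. \<forall>m\<ge>N. \<forall>n\<ge>N. sqrt (Re (cinner ((X::nat \<Rightarrow> 'a) m - X n) (X m - X n))) < e) \<Longrightarrow>
       (\<exists>L. \<forall>e>0. \<exists>N. \<forall>n\<ge>N. sqrt (Re (cinner (X n - L) (X n - L))) < e)"

definition hnorm :: "'h::complex_hilbert \<Rightarrow> real" where
  "hnorm x = sqrt (Re (cinner x x))"

definition bounded_op :: "('h::complex_hilbert \<Rightarrow> 'h) \<Rightarrow> bool" where
  "bounded_op T \<longleftrightarrow> (\<forall>x y. T (x + y) = T x + T y) \<and> (\<forall>c x. T (scaleC c x) = scaleC c (T x))
     \<and> (\<exists>K. \<forall>x. hnorm (T x) \<le> K * hnorm x)"

definition opnorm :: "('h::complex_hilbert \<Rightarrow> 'h) \<Rightarrow> real" where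
  "opnorm T = Sup {hnorm (T x) | x. hnorm x \<le> 1}"

definition adjoint :: "('h::complex_hilbert \<Rightarrow> 'h) \<Rightarrow> ('h \<Rightarrow> 'h)" where
  "adjoint T = (SOME S. \<forall>x y. cinner (T x) y = cinner x (S y))"

definition op_add :: "('h::complex_hilbert \<Rightarrow> 'h) \<Rightarrow> ('h \<Rightarrow> 'h) \<Rightarrow> ('h \<Rightarrow> 'h)" where
  "op_add S T = (\<lambda>x. S x + T x)"

definition op_diff :: "('h::complex_hilbert \<Rightarrow> 'h) \<Rightarrow> ('h \<Rightarrow> 'h) \<Rightarrow> ('h \<Rightarrow> 'h)" where
  "op_diff S T = (\<lambda>x. S x - T x)"

definition op_scale :: "complex \<Rightarrow> ('h::complex_hilbert \<Rightarrow> 'h) \<Rightarrow> ('h \<Rightarrow> 'h)" where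
  "op_scale c T = (\<lambda>x. scaleC c (T x))"

definition op_zero :: "'h::complex_hilbert \<Rightarrow> 'h" where
  "op_zero = (\<lambda>x. 0)"

text \<open>A (concrete) C*-algebra on H: a norm-closed *-subalgebra of B(H).
  Being a set of operators on H, it is faithfully represented on H.\<close>

definition cstar_subalgebra :: "('h::complex_hilbert \<Rightarrow> 'h) set \<Rightarrow> bool" where
  "cstar_subalgebra A \<longleftrightarrow>
     (\<forall>a\<in>A. bounded_op a) \<and> op_zero \<in> A \<and>
     (\<forall>a\<in>A. \<forall>b\<in>A. op_add a b \<in> A) \<and>
     (\<forall>c. \<forall>a\<in>A. op_scale c a \<in> A) \<and>
     (\<forall>a\<in>A. \<forall>b\<in>A. a \<circ> b \<in> A) \<and>
     (\<forall>a\<in>A. adjoint a \<in> A) \<and>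
     (\<forall>T. bounded_op T \<and> (\<forall>e>0. \<exists>a\<in>A. opnorm (op_diff T a) < e) \<longrightarrow> T \<in> A)"

text \<open>Non-degeneracy: the closed linear span of A H is H.\<close>

definition nondegenerate :: "('h::complex_hilbert \<Rightarrow> 'h) set \<Rightarrow> bool" where
  "nondegenerate A \<longleftrightarrow>
     (\<forall>\<xi>. \<forall>e>0. \<exists>ps :: (complex \<times> ('h \<Rightarrow> 'h) \<times> 'h) list.
        (\<forall>(c, a, \<eta>) \<in> set ps. a \<in> A) \<and>
        hnorm (\<xi> - sum_list (map (\<lambda>(c, a, \<eta>). scaleC c (a \<eta>)) ps)) < e)"

definition ultrafilter :: "'i filter \<Rightarrow> bool" where
  "ultrafilter U \<longleftrightarrow> U \<noteq> bot \<and> (\<forall>P. eventually P U \<or> eventually (\<lambda>i. \<not> P i) U)"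

definition bdd_family :: "('h::complex_hilbert \<Rightarrow> 'h) set \<Rightarrow> ('i \<Rightarrow> 'h \<Rightarrow> 'h) \<Rightarrow> bool" where
  "bdd_family A f \<longleftrightarrow> (\<forall>i. f i \<in> A) \<and> (\<exists>M. \<forall>i. opnorm (f i) \<le> M)"

definition strict_conv ::
  "'i filter \<Rightarrow> ('h::complex_hilbert \<Rightarrow> 'h) set \<Rightarrow> ('i \<Rightarrow> 'h \<Rightarrow> 'h) \<Rightarrow> ('h \<Rightarrow> 'h) \<Rightarrow> bool" where
  "strict_conv U A f T \<longleftrightarrow>
     (\<forall>x\<in>A. \<forall>e>0. eventually (\<lambda>i. opnorm (op_diff (f i \<circ> x) (T \<circ> x)) < e
                                 \<and> opnorm (op_diff (x \<circ> f i) (x \<circ> T)) < e) U)"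

text \<open>Representatives of A^{sU}: bounded families U-strict convergent to some operator in B(H).\<close>

definition sfam :: "'i filter \<Rightarrow> ('h::complex_hilbert \<Rightarrow> 'h) set \<Rightarrow> ('i \<Rightarrow> 'h \<Rightarrow> 'h) set" where
  "sfam U A = {f. bdd_family A f \<and> (\<exists>T. bounded_op T \<and> strict_conv U A f T)}"

text \<open>Representatives of J: those U-strict convergent to 0 (this includes the
  U-null families, so quotienting sfam by jfam gives A^{sU}/J).\<close>

definition jfam :: "'i filter \<Rightarrow> ('h::complex_hilbert \<Rightarrow> 'h) set \<Rightarrow> ('i \<Rightarrow> 'h \<Rightarrow> 'h) set" where
  "jfam U A = {f \<in> sfam U A. strict_conv U A f op_zero}"

definition qcls :: "'i filter \<Rightarrow> ('h::complex_hilbert \<Rightarrow> 'h) set \<Rightarrow> ('i \<Rightarrow> 'h \<Rightarrow> 'h) \<Rightarrow> ('i \<Rightarrow> 'h \<Rightarrow> 'h) set" where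
  "qcls U A f = {g \<in> sfam U A. (\<lambda>i. op_diff (f i) (g i)) \<in> jfam U A}"

definition quot :: "'i filter \<Rightarrow> ('h::complex_hilbert \<Rightarrow> 'h) set \<Rightarrow> ('i \<Rightarrow> 'h \<Rightarrow> 'h) set set" where
  "quot U A = qcls U A ` sfam U A"

definition qrep :: "('i \<Rightarrow> 'h \<Rightarrow> 'h) set \<Rightarrow> ('i \<Rightarrow> 'h \<Rightarrow> 'h)" where
  "qrep X = (SOME f. f \<in> X)"

definition qzero :: "'i filter \<Rightarrow> ('h::complex_hilbert \<Rightarrow> 'h) set \<Rightarrow> ('i \<Rightarrow> 'h \<Rightarrow> 'h) set" where
  "qzero U A = qcls U A (\<lambda>i. op_zero)"

definition qadd :: "'i filter \<Rightarrow> ('h::complex_hilbert \<Rightarrow> 'h) set \<Rightarrow> ('i \<Rightarrow> 'h \<Rightarrow> 'h) set \<Rightarrow> ('i \<Rightarrow> 'h \<Rightarrow> 'h) set \<Rightarrow> ('i \<Rightarrow> 'h \<Rightarrow> 'h) set" where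
  "qadd U A X Y = qcls U A (\<lambda>i. op_add (qrep X i) (qrep Y i))"

definition qdiff :: "'i filter \<Rightarrow> ('h::complex_hilbert \<Rightarrow> 'h) set \<Rightarrow> ('i \<Rightarrow> 'h \<Rightarrow> 'h) set \<Rightarrow> ('i \<Rightarrow> 'h \<Rightarrow> 'h) set \<Rightarrow> ('i \<Rightarrow> 'h \<Rightarrow> 'h) set" where
  "qdiff U A X Y = qcls U A (\<lambda>i. op_diff (qrep X i) (qrep Y i))"

definition qscale :: "'i filter \<Rightarrow> ('h::complex_hilbert \<Rightarrow> 'h) set \<Rightarrow> complex \<Rightarrow> ('i \<Rightarrow> 'h \<Rightarrow> 'h) set \<Rightarrow> ('i \<Rightarrow> 'h \<Rightarrow> 'h) set" where
  "qscale U A c X = qcls U A (\<lambda>i. op_scale c (qrep X i))"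

definition qmul :: "'i filter \<Rightarrow> ('h::complex_hilbert \<Rightarrow> 'h) set \<Rightarrow> ('i \<Rightarrow> 'h \<Rightarrow> 'h) set \<Rightarrow> ('i \<Rightarrow> 'h \<Rightarrow> 'h) set \<Rightarrow> ('i \<Rightarrow> 'h \<Rightarrow> 'h) set" where
  "qmul U A X Y = qcls U A (\<lambda>i. qrep X i \<circ> qrep Y i)"

definition qnorm :: "'i filter \<Rightarrow> ('h::complex_hilbert \<Rightarrow> 'h) set \<Rightarrow> ('i \<Rightarrow> 'h \<Rightarrow> 'h) set \<Rightarrow> real" where
  "qnorm U A X = Inf ((\<lambda>n. Lim U (\<lambda>i. opnorm (op_diff (qrep X i) (n i)))) ` jfam U A)"

definition qideal :: "'i filter \<Rightarrow> ('h::complex_hilbert \<Rightarrow> 'h) set \<Rightarrow> ('i \<Rightarrow> 'h \<Rightarrow> 'h) set set \<Rightarrow> bool" where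
  "qideal U A K \<longleftrightarrow> K \<subseteq> quot U A \<and> qzero U A \<in> K \<and>
     (\<forall>X\<in>K. \<forall>Y\<in>K. qadd U A X Y \<in> K) \<and>
     (\<forall>c. \<forall>X\<in>K. qscale U A c X \<in> K) \<and>
     (\<forall>X\<in>quot U A. \<forall>Y\<in>K. qmul U A X Y \<in> K \<and> qmul U A Y X \<in> K)"

definition qclosed :: "'i filter \<Rightarrow> ('h::complex_hilbert \<Rightarrow> 'h) set \<Rightarrow> ('i \<Rightarrow> 'h \<Rightarrow> 'h) set set \<Rightarrow> bool" where
  "qclosed U A K \<longleftrightarrow>
     (\<forall>X\<in>quot U A. (\<forall>e>0. \<exists>Y\<in>K. qnorm U A (qdiff U A X Y) < e) \<longrightarrow> X \<in> K)"

definition qessential :: "'i filter \<Rightarrow> ('h::complex_hilbert \<Rightarrow> 'h) set \<Rightarrow> ('i \<Rightarrow> 'h \<Rightarrow> 'h) set set \<Rightarrow> bool" where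
  "qessential U A E \<longleftrightarrow>
     (\<forall>K. qideal U A K \<and> K \<noteq> {qzero U A} \<longrightarrow> K \<inter> E \<noteq> {qzero U A})"

definition const_embed :: "'i filter \<Rightarrow> ('h::complex_hilbert \<Rightarrow> 'h) set \<Rightarrow> ('h \<Rightarrow> 'h) \<Rightarrow> ('i \<Rightarrow> 'h \<Rightarrow> 'h) set" where
  "const_embed U A a = qcls U A (\<lambda>i. a)"

end

theory Submission
  imports Defs
begin


lemma scaleC_zero_right[simp]: "scaleC c (0::'h::complex_hilbert) = 0"
proof -
  have "scaleC c 0 = scaleC c 0 + scaleC c 0" using scaleC_add_right[of c 0 0] by (simp only: add_0_right add_0_left)
  then show ?thesis by (simp only: add_cancel_right_right)
qed
lemma scaleC_zero_left[simp]: "scaleC 0 (x::'h::complex_hilbert) = 0"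
proof -
  have "scaleC 0 x = scaleC 0 x + scaleC 0 x" using scaleC_add_left[of 0 0 x] by (simp only: add_0_right add_0_left)
  then show ?thesis by (simp only: add_cancel_right_right)
qed
lemma scaleC_minus_right: "scaleC c (- (x::'h::complex_hilbert)) = - scaleC c x"
proof -
  have "scaleC c (x + - x) = scaleC c x + scaleC c (- x)" by (rule scaleC_add_right)
  then have h: "scaleC c x + scaleC c (- x) = 0" by simp
  from minus_unique[OF h] show ?thesis by simp
qed
lemma scaleC_diff_right: "scaleC c ((x::'h::complex_hilbert) - y) = scaleC c x - scaleC c y"
  using scaleC_add_right[of c x "- y"] by (simp add: scaleC_minus_right)
lemma scaleC_minus_one: "scaleC (-1) (x::'h::complex_hilbert) = - x"
proof -
  have "scaleC (1 + -1) x = scaleC 1 x + scaleC (-1) x" by (rule scaleC_add_left)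
  then have h: "x + scaleC (-1) x = 0" by (simp add: scaleC_one)
  from minus_unique[OF h] show ?thesis by simp
qed
lemma cinner_zero_right[simp]: "cinner (x::'h::complex_hilbert) 0 = 0"
proof -
  have "cinner x 0 = cinner x 0 + cinner x 0" using cinner_add_right[of x 0 0] by (simp only: add_0_right add_0_left)
  then show ?thesis by (simp only: add_cancel_right_right)
qed
lemma cinner_zero_left[simp]: "cinner 0 (x::'h::complex_hilbert) = 0"
  by (subst cinner_commute) simp
lemma cinner_add_left: "cinner ((x::'h::complex_hilbert) + y) z = cinner x z + cinner y z"
  by (subst (1 2 3) cinner_commute) (simp add: cinner_add_right)
lemma cinner_scaleC_left: "cinner (scaleC c (x::'h::complex_hilbert)) y = cnj c * cinner x y"
  by (subst (1 2) cinner_commute) (simp add: cinner_scaleC_right)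
lemma cinner_minus_right: "cinner (x::'h::complex_hilbert) (- y) = - cinner x y"
proof -
  have "cinner x (y + - y) = cinner x y + cinner x (- y)" by (rule cinner_add_right)
  then have h: "cinner x y + cinner x (- y) = 0" by simp
  from minus_unique[OF h] show ?thesis by simp
qed
lemma cinner_minus_left: "cinner (- (x::'h::complex_hilbert)) y = - cinner x y"
  by (subst (1 2) cinner_commute) (simp add: cinner_minus_right)
lemma cinner_diff_right: "cinner (x::'h::complex_hilbert) (y - z) = cinner x y - cinner x z"
  using cinner_add_right[of x y "- z"] by (simp add: cinner_minus_right)
lemma cinner_diff_left: "cinner ((x::'h::complex_hilbert) - y) z = cinner x z - cinner y z"
  using cinner_add_left[of x "- y" z] by (simp add: cinner_minus_left)
lemma cinner_self_real: "Im (cinner (x::'h::complex_hilbert) x) = 0"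
proof -
  have "Im (cinner x x) = Im (cnj (cinner x x))" using cinner_commute[of x x] by (rule arg_cong)
  then show ?thesis by simp
qed
lemma cinner_self_eq: "cinner (x::'h::complex_hilbert) x = complex_of_real (Re (cinner x x))"
  using cinner_self_real by (simp add: complex_eq_iff)

lemma hnorm_nonneg: "0 \<le> hnorm (x::'h::complex_hilbert)" by (simp add: hnorm_def cinner_nonneg)
lemma hnorm_sq: "(hnorm (x::'h::complex_hilbert))^2 = Re (cinner x x)"
  unfolding hnorm_def by (rule real_sqrt_pow2[OF cinner_nonneg])
lemma hnorm_zero[simp]: "hnorm (0::'h::complex_hilbert) = 0" by (simp add: hnorm_def)
lemma hnorm_eq_zero: "hnorm (x::'h::complex_hilbert) = 0 \<longleftrightarrow> x = 0"
proof
  assume "hnorm x = 0"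
  then have "Re (cinner x x) = 0" using hnorm_sq[of x] by simp
  then have "cinner x x = 0" using cinner_self_real[of x] by (simp add: complex_eq_iff)
  then show "x = 0" by (rule cinner_eq_zero)
qed simp

lemma hnorm_scaleC: "hnorm (scaleC c (x::'h::complex_hilbert)) = cmod c * hnorm x"
proof -
  have "cinner (scaleC c x) (scaleC c x) = (cnj c * c) * cinner x x"
    by (simp add: cinner_scaleC_left cinner_scaleC_right)
  also have "cnj c * c = complex_of_real ((cmod c)^2)"
    by (subst complex_norm_square) (simp add: mult.commute)
  finally have "Re (cinner (scaleC c x) (scaleC c x)) = (cmod c)^2 * Re (cinner x x)"
    by simp
  then show ?thesis unfolding hnorm_def by (simp add: real_sqrt_mult)
qed

lemma hnorm_minus: "hnorm (- (x::'h::complex_hilbert)) = hnorm x"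
  using hnorm_scaleC[of "-1" x] by (simp add: scaleC_minus_one)

lemma hnorm_diff_commute: "hnorm ((x::'h::complex_hilbert) - y) = hnorm (y - x)"
  using hnorm_minus[of "x - y"] by simp

lemma Re_cinner_commute: "Re (cinner (y::'h::complex_hilbert) x) = Re (cinner x y)"
proof -
  have "Re (cinner y x) = Re (cnj (cinner x y))" using cinner_commute[of y x] by (rule arg_cong)
  then show ?thesis by simp
qed

lemma Re_cinner_expand:
  fixes x y :: "'h::complex_hilbert"
  shows "Re (cinner (x - scaleC (complex_of_real r) y) (x - scaleC (complex_of_real r) y))
     = Re (cinner x x) - 2 * r * Re (cinner x y) + r * r * Re (cinner y y)"
proof -
  have "cinner (x - scaleC (complex_of_real r) y) (x - scaleC (complex_of_real r) y)
     = cinner x x - complex_of_real r * cinner y x - complex_of_real r * (cinner x y - complex_of_real r * cinner y y)"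
    by (simp only: cinner_diff_left cinner_diff_right cinner_scaleC_left cinner_scaleC_right complex_cnj_complex_of_real)
  then have "Re (cinner (x - scaleC (complex_of_real r) y) (x - scaleC (complex_of_real r) y))
     = Re (cinner x x) - r * Re (cinner y x) - r * (Re (cinner x y) - r * Re (cinner y y))"
    by simp
  then show ?thesis using Re_cinner_commute[of y x] by (simp add: algebra_simps)
qed

lemma cauchy_schwarz_Re: "Re (cinner (x::'h::complex_hilbert) y) \<le> hnorm x * hnorm y"
proof (cases "y = 0")
  case True then show ?thesis by simp
next
  case False
  define a where "a = Re (cinner x y)"
  define h where "h = hnorm y"
  have hy: "h > 0" using False hnorm_eq_zero[of y] hnorm_nonneg[of y] h_def by linarith
  have yy: "Re (cinner y y) = h * h" by (simp add: h_def hnorm_sq[symmetric] power2_eq_square)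
  have xx: "Re (cinner x x) = hnorm x * hnorm x" by (simp add: hnorm_sq[symmetric] power2_eq_square)
  define r where "r = a / (h * h)"
  have "0 \<le> Re (cinner (x - scaleC (complex_of_real r) y) (x - scaleC (complex_of_real r) y))"
    by (rule cinner_nonneg)
  also have "\<dots> = hnorm x * hnorm x - 2 * r * a + r * r * (h * h)"
    unfolding Re_cinner_expand yy xx a_def ..
  also have "\<dots> = hnorm x * hnorm x - a * a / (h * h)"
    using hy by (simp add: r_def field_simps)
  finally have "a * a \<le> (hnorm x * h) * (hnorm x * h)" using hy
    by (simp add: field_simps)
  then have "\<bar>a\<bar> \<le> hnorm x * h"
    using hnorm_nonneg[of x] hy by (metis abs_le_square_iff abs_mult_self_eq abs_of_nonneg mult_nonneg_nonneg power2_eq_square less_imp_le)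
  then show ?thesis unfolding a_def h_def by simp
qed

lemma hnorm_triangle: "hnorm ((x::'h::complex_hilbert) + y) \<le> hnorm x + hnorm y"
proof -
  have e: "(hnorm (x+y))^2 = Re (cinner x x) + Re (cinner x y) + Re (cinner y x) + Re (cinner y y)"
    by (simp add: hnorm_sq cinner_add_left cinner_add_right)
  have 1: "Re (cinner x y) \<le> hnorm x * hnorm y"
    by (rule cauchy_schwarz_Re)
  have 2: "Re (cinner y x) \<le> hnorm x * hnorm y"
    using cauchy_schwarz_Re[of y x] by (simp add: mult.commute)
  have 3: "(hnorm x + hnorm y)^2 = Re (cinner x x) + 2 * (hnorm x * hnorm y) + Re (cinner y y)"
    by (simp add: hnorm_sq[symmetric] power2_sum)
  have "(hnorm (x+y))^2 \<le> (hnorm x + hnorm y)^2"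
    unfolding e 3 using 1 2 by linarith
  then show ?thesis by (rule power2_le_imp_le) (simp add: add_nonneg_nonneg hnorm_nonneg)
qed

lemma hnorm_triangle_diff: "hnorm ((x::'h::complex_hilbert) - z) \<le> hnorm (x - y) + hnorm (y - z)"
  using hnorm_triangle[of "x - y" "y - z"] by simp


lemma hnorm_diff_le: "hnorm ((a::'h::complex_hilbert) - b) \<le> hnorm a + hnorm b"
  using hnorm_triangle[of a "- b"] hnorm_minus[of b] by simp

lemma bop_add: "bounded_op T \<Longrightarrow> T (x + y) = T x + T y" by (simp add: bounded_op_def)
lemma bop_scale: "bounded_op T \<Longrightarrow> T (scaleC c x) = scaleC c (T x)" by (simp add: bounded_op_def)
lemma bop_zero: "bounded_op (T::'h::complex_hilbert \<Rightarrow> 'h) \<Longrightarrow> T 0 = 0"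
  using bop_scale[of T 0 0] by simp
lemma bop_minus: "bounded_op (T::'h::complex_hilbert \<Rightarrow> 'h) \<Longrightarrow> T (- x) = - T x"
  using bop_scale[of T "-1" x] by (simp add: scaleC_minus_one)
lemma bop_diff: "bounded_op (T::'h::complex_hilbert \<Rightarrow> 'h) \<Longrightarrow> T (x - y) = T x - T y"
  using bop_add[of T x "- y"] bop_minus[of T y] by simp

lemma opnorm_le:
  assumes "\<And>x. hnorm (T x) \<le> K * hnorm x" "0 \<le> K"
  shows "opnorm (T::'h::complex_hilbert \<Rightarrow> 'h) \<le> K"
  unfolding opnorm_def
proof (rule cSup_least)
  have "hnorm (0::'h) \<le> 1" by simp
  then show "{hnorm (T x) |x. hnorm x \<le> 1} \<noteq> {}" by blast
next
  fix r assume "r \<in> {hnorm (T x) |x. hnorm x \<le> 1}"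
  then obtain x where r: "r = hnorm (T x)" and x: "hnorm x \<le> 1" by auto
  have "K * hnorm x \<le> K * 1" using x by (rule mult_left_mono[OF _ assms(2)])
  then show "r \<le> K" using assms(1)[of x] r by simp
qed

lemma bop_bdd:
  assumes T: "bounded_op (T::'h::complex_hilbert \<Rightarrow> 'h)"
  shows "bdd_above {hnorm (T x) |x. hnorm x \<le> 1}"
proof -
  obtain K where K: "\<And>x. hnorm (T x) \<le> K * hnorm x" using T by (auto simp: bounded_op_def)
  show ?thesis
  proof (rule bdd_aboveI)
    fix r assume "r \<in> {hnorm (T x) |x. hnorm x \<le> 1}"
    then obtain x where r: "r = hnorm (T x)" and x: "hnorm x \<le> 1" by auto
    have "K * hnorm x \<le> \<bar>K\<bar> * hnorm x" using hnorm_nonneg[of x] by (simp add: mult_right_mono)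
    also have "\<dots> \<le> \<bar>K\<bar> * 1" using x by (rule mult_left_mono) simp
    finally show "r \<le> \<bar>K\<bar>" using K[of x] r by simp
  qed
qed

lemma opnorm_bound:
  assumes T: "bounded_op (T::'h::complex_hilbert \<Rightarrow> 'h)"
  shows "hnorm (T x) \<le> opnorm T * hnorm x"
proof (cases "hnorm x = 0")
  case True
  then have "x = 0" by (simp add: hnorm_eq_zero)
  then show ?thesis using bop_zero[OF T] by simp
next
  case False
  then have hp: "hnorm x > 0" using hnorm_nonneg[of x] by simp
  define x' where "x' = scaleC (complex_of_real (1 / hnorm x)) x"
  have c: "cmod (complex_of_real (1 / hnorm x)) = 1 / hnorm x" using hp by (simp add: norm_divide)
  have "hnorm x' = 1" using hp unfolding x'_def hnorm_scaleC c by simp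
  then have "hnorm (T x') \<in> {hnorm (T x) |x. hnorm x \<le> 1}" by auto
  then have le: "hnorm (T x') \<le> opnorm T" unfolding opnorm_def using bop_bdd[OF T] by (rule cSup_upper)
  have "hnorm (T x') = hnorm (T x) / hnorm x"
    unfolding x'_def bop_scale[OF T] hnorm_scaleC c by simp
  then show ?thesis using le hp by (simp add: divide_le_eq mult.commute)
qed

lemma opnorm_nonneg: "bounded_op (T::'h::complex_hilbert \<Rightarrow> 'h) \<Longrightarrow> 0 \<le> opnorm T"
proof -
  assume T: "bounded_op T"
  have "hnorm (T 0) \<in> {hnorm (T x) |x. hnorm x \<le> 1}" by auto
  then have "hnorm (T 0) \<le> opnorm T" unfolding opnorm_def using bop_bdd[OF T] by (rule cSup_upper)
  then show ?thesis using hnorm_nonneg[of "T 0"] by linarith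
qed

lemma bounded_opI:
  assumes "\<And>x y. T (x + y) = T x + T y" "\<And>c x. T (scaleC c x) = scaleC c (T x)"
    "\<And>x. hnorm (T x) \<le> K * hnorm x"
  shows "bounded_op (T::'h::complex_hilbert \<Rightarrow> 'h)"
  using assms unfolding bounded_op_def by blast

lemma bounded_op_zero: "bounded_op (op_zero::'h::complex_hilbert \<Rightarrow> 'h)"
  by (rule bounded_opI[where K=0]) (auto simp: op_zero_def)

lemma opnorm_zero: "opnorm (op_zero::'h::complex_hilbert \<Rightarrow> 'h) = 0"
proof -
  have "opnorm (op_zero::'h \<Rightarrow> 'h) \<le> 0" by (rule opnorm_le) (simp_all add: op_zero_def)
  then show ?thesis using opnorm_nonneg[OF bounded_op_zero, where 'h='h] by linarith
qed

lemma bounded_op_add: "bounded_op S \<Longrightarrow> bounded_op T \<Longrightarrow> bounded_op (op_add S (T::'h::complex_hilbert \<Rightarrow> 'h))"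
  apply (rule bounded_opI[where K="opnorm S + opnorm T"])
  apply (simp_all add: op_add_def bop_add bop_scale scaleC_add_right)
  subgoal for x
    using hnorm_triangle[of "S x" "T x"] opnorm_bound[of S x] opnorm_bound[of T x]
    by (simp add: distrib_right)
  done

lemma bounded_op_diff:
  assumes S: "bounded_op S" and T: "bounded_op (T::'h::complex_hilbert \<Rightarrow> 'h)"
  shows "bounded_op (op_diff S T)"
proof (rule bounded_opI[where K="opnorm S + opnorm T"])
  fix x y show "op_diff S T (x + y) = op_diff S T x + op_diff S T y"
    by (simp add: op_diff_def bop_add[OF S] bop_add[OF T] algebra_simps)
next
  fix c x show "op_diff S T (scaleC c x) = scaleC c (op_diff S T x)"
    by (simp add: op_diff_def bop_scale[OF S] bop_scale[OF T] scaleC_diff_right)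
next
  fix x
  have "hnorm (S x - T x) \<le> hnorm (S x) + hnorm (T x)" by (rule hnorm_diff_le)
  also have "\<dots> \<le> opnorm S * hnorm x + opnorm T * hnorm x"
    using opnorm_bound[OF S, of x] opnorm_bound[OF T, of x] by linarith
  finally show "hnorm (op_diff S T x) \<le> (opnorm S + opnorm T) * hnorm x"
    by (simp add: op_diff_def distrib_right)
qed

lemma bounded_op_scale: "bounded_op T \<Longrightarrow> bounded_op (op_scale c (T::'h::complex_hilbert \<Rightarrow> 'h))"
  apply (rule bounded_opI[where K="cmod c * opnorm T"])
  apply (simp_all add: op_scale_def bop_add bop_scale scaleC_add_right scaleC_scaleC mult.commute hnorm_scaleC)
  subgoal for x using opnorm_bound[of T x] mult_left_mono[of "hnorm (T x)" "opnorm T * hnorm x" "cmod c"]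
    by (simp add: mult.assoc mult.commute mult.left_commute)
  done

lemma bounded_op_comp: "bounded_op S \<Longrightarrow> bounded_op T \<Longrightarrow> bounded_op (S \<circ> (T::'h::complex_hilbert \<Rightarrow> 'h))"
  apply (rule bounded_opI[where K="opnorm S * opnorm T"])
  apply (simp_all add: bop_add bop_scale)
  subgoal for x
    using opnorm_bound[of S "T x"] opnorm_bound[of T x] opnorm_nonneg[of S]
      mult_left_mono[of "hnorm (T x)" "opnorm T * hnorm x" "opnorm S"]
    by (simp add: mult.assoc)
  done

lemma opnorm_comp: "bounded_op S \<Longrightarrow> bounded_op T \<Longrightarrow> opnorm (S \<circ> (T::'h::complex_hilbert \<Rightarrow> 'h)) \<le> opnorm S * opnorm T"
  apply (rule opnorm_le)
  subgoal for x
    using opnorm_bound[of S "T x"] opnorm_bound[of T x] opnorm_nonneg[of S]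
      mult_left_mono[of "hnorm (T x)" "opnorm T * hnorm x" "opnorm S"]
    by (simp add: mult.assoc)
  by (simp add: opnorm_nonneg)

lemma opnorm_add: "bounded_op S \<Longrightarrow> bounded_op T \<Longrightarrow> opnorm (op_add S (T::'h::complex_hilbert \<Rightarrow> 'h)) \<le> opnorm S + opnorm T"
  apply (rule opnorm_le)
  subgoal for x
    using hnorm_triangle[of "S x" "T x"] opnorm_bound[of S x] opnorm_bound[of T x]
    by (simp add: op_add_def distrib_right)
  by (simp add: opnorm_nonneg)

lemma opnorm_diff: "bounded_op S \<Longrightarrow> bounded_op T \<Longrightarrow> opnorm (op_diff S (T::'h::complex_hilbert \<Rightarrow> 'h)) \<le> opnorm S + opnorm T"
  apply (rule opnorm_le)
  subgoal for x
    using hnorm_diff_le[of "S x" "T x"] opnorm_bound[of S x] opnorm_bound[of T x]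
    by (simp add: op_diff_def distrib_right)
  by (simp add: opnorm_nonneg)

lemma opnorm_diff_commute: "opnorm (op_diff S (T::'h::complex_hilbert \<Rightarrow> 'h)) = opnorm (op_diff T S)"
  unfolding op_diff_def opnorm_def by (simp add: hnorm_diff_commute)

lemma opnorm_lt:
  assumes "\<And>x. hnorm (T x) \<le> K * hnorm x" "0 \<le> K" "K < e"
  shows "opnorm (T::'h::complex_hilbert \<Rightarrow> 'h) < e"
  using opnorm_le[OF assms(1,2)] assms(3) by simp


lemma ultra_limit:
  fixes w :: "'i \<Rightarrow> real"
  assumes U: "ultrafilter U" and b: "\<And>i. w i \<in> {lo..hi}"
  shows "\<exists>L. (w \<longlongrightarrow> L) U"
proof -
  have Ub: "U \<noteq> bot" using U by (simp add: ultrafilter_def)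
  define F where "F = filtermap w U"
  have Fb: "F \<noteq> bot" using Ub by (simp add: F_def filtermap_bot_iff)
  have ev: "eventually (\<lambda>x. x \<in> {lo..hi}) F" using b by (simp add: F_def eventually_filtermap)
  have "compact {lo..hi}" by simp
  then obtain L where L: "inf (nhds L) F \<noteq> bot"
    using Fb ev unfolding compact_filter by blast
  show ?thesis
  proof (rule exI, rule topological_tendstoI)
    fix S assume S: "open S" "L \<in> S"
    show "eventually (\<lambda>i. w i \<in> S) U"
    proof (rule ccontr)
      assume "\<not> eventually (\<lambda>i. w i \<in> S) U"
      then have n: "eventually (\<lambda>i. \<not> w i \<in> S) U" using U unfolding ultrafilter_def by blast
      then have "eventually (\<lambda>x. x \<notin> S) F" by (simp add: F_def eventually_filtermap)
      moreover have "eventually (\<lambda>x. x \<in> S) (nhds L)" using S by (rule eventually_nhds_in_open)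
      ultimately have "eventually (\<lambda>x. False) (inf (nhds L) F)"
        unfolding eventually_inf by blast
      then show False using L by (simp add: trivial_limit_def[symmetric])
    qed
  qed
qed


locale setting =
  fixes U :: "'i filter" and A :: "('h::complex_hilbert \<Rightarrow> 'h) set"
  assumes ultra: "ultrafilter U" and cs: "cstar_subalgebra A" and nd: "nondegenerate A"
begin

lemma Ubot: "U \<noteq> bot" using ultra by (simp add: ultrafilter_def)

lemma A_bounded: "a \<in> A \<Longrightarrow> bounded_op a" using cs by (simp add: cstar_subalgebra_def)
lemma A_zero: "op_zero \<in> A" using cs by (simp add: cstar_subalgebra_def)
lemma A_add: "a \<in> A \<Longrightarrow> b \<in> A \<Longrightarrow> op_add a b \<in> A" using cs by (simp add: cstar_subalgebra_def)
lemma A_scale: "a \<in> A \<Longrightarrow> op_scale c a \<in> A" using cs by (simp add: cstar_subalgebra_def)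
lemma A_comp: "a \<in> A \<Longrightarrow> b \<in> A \<Longrightarrow> a \<circ> b \<in> A" using cs by (simp add: cstar_subalgebra_def)
lemma A_closed: "bounded_op T \<Longrightarrow> (\<And>e. e > 0 \<Longrightarrow> \<exists>a\<in>A. opnorm (op_diff T a) < e) \<Longrightarrow> T \<in> A"
  using cs unfolding cstar_subalgebra_def by blast
lemma A_diff: "a \<in> A \<Longrightarrow> b \<in> A \<Longrightarrow> op_diff a b \<in> A"
proof -
  assume a: "a \<in> A" and b: "b \<in> A"
  have "op_diff a b = op_add a (op_scale (-1) b)"
    by (rule ext) (simp add: op_diff_def op_add_def op_scale_def scaleC_minus_one)
  then show ?thesis using A_add[OF a A_scale[OF b]] by simp
qed

definition SC :: "('i \<Rightarrow> 'h \<Rightarrow> 'h) \<Rightarrow> ('h \<Rightarrow> 'h) \<Rightarrow> bool" where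
  "SC f T \<longleftrightarrow> (\<forall>x\<in>A. \<forall>e>0. eventually (\<lambda>i. \<forall>v. hnorm (f i (x v) - T (x v)) \<le> e * hnorm v
      \<and> hnorm (x (f i v) - x (T v)) \<le> e * hnorm v) U)"

lemma SCD: "SC f T \<Longrightarrow> x \<in> A \<Longrightarrow> e > 0 \<Longrightarrow> eventually (\<lambda>i. \<forall>v. hnorm (f i (x v) - T (x v)) \<le> e * hnorm v
      \<and> hnorm (x (f i v) - x (T v)) \<le> e * hnorm v) U"
  unfolding SC_def by blast

lemma SC_strict:
  assumes f: "\<And>i. bounded_op (f i)" and T: "bounded_op T"
  shows "strict_conv U A f T \<longleftrightarrow> SC f T"
proof
  assume sc: "strict_conv U A f T"
  show "SC f T" unfolding SC_def
  proof (intro ballI allI impI)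
    fix x e assume x: "x \<in> A" and e: "(e::real) > 0"
    have xb: "bounded_op x" using x by (rule A_bounded)
    have ev: "eventually (\<lambda>i. opnorm (op_diff (f i \<circ> x) (T \<circ> x)) < e \<and> opnorm (op_diff (x \<circ> f i) (x \<circ> T)) < e) U"
      using sc x e unfolding strict_conv_def by blast
    show "eventually (\<lambda>i. \<forall>v. hnorm (f i (x v) - T (x v)) \<le> e * hnorm v
      \<and> hnorm (x (f i v) - x (T v)) \<le> e * hnorm v) U"
      using ev
    proof eventually_elim
      case (elim i)
      have b1: "bounded_op (op_diff (f i \<circ> x) (T \<circ> x))"
        by (intro bounded_op_diff bounded_op_comp f T xb)
      have b2: "bounded_op (op_diff (x \<circ> f i) (x \<circ> T))"
        by (intro bounded_op_diff bounded_op_comp f T xb)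
      show ?case
      proof
        fix v
        have "hnorm (op_diff (f i \<circ> x) (T \<circ> x) v) \<le> opnorm (op_diff (f i \<circ> x) (T \<circ> x)) * hnorm v"
          by (rule opnorm_bound[OF b1])
        also have "\<dots> \<le> e * hnorm v" using elim by (intro mult_right_mono) (auto simp: hnorm_nonneg)
        finally have 1: "hnorm (f i (x v) - T (x v)) \<le> e * hnorm v" by (simp add: op_diff_def)
        have "hnorm (op_diff (x \<circ> f i) (x \<circ> T) v) \<le> opnorm (op_diff (x \<circ> f i) (x \<circ> T)) * hnorm v"
          by (rule opnorm_bound[OF b2])
        also have "\<dots> \<le> e * hnorm v" using elim by (intro mult_right_mono) (auto simp: hnorm_nonneg)
        finally have 2: "hnorm (x (f i v) - x (T v)) \<le> e * hnorm v" by (simp add: op_diff_def)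
        show "hnorm (f i (x v) - T (x v)) \<le> e * hnorm v \<and> hnorm (x (f i v) - x (T v)) \<le> e * hnorm v"
          using 1 2 by simp
      qed
    qed
  qed
next
  assume sc: "SC f T"
  show "strict_conv U A f T" unfolding strict_conv_def
  proof (intro ballI allI impI)
    fix x e assume x: "x \<in> A" and e: "(e::real) > 0"
    have e2: "e/2 > 0" using e by simp
    have ev: "eventually (\<lambda>i. \<forall>v. hnorm (f i (x v) - T (x v)) \<le> (e/2) * hnorm v
      \<and> hnorm (x (f i v) - x (T v)) \<le> (e/2) * hnorm v) U"
      using SCD[OF sc x e2] .
    show "eventually (\<lambda>i. opnorm (op_diff (f i \<circ> x) (T \<circ> x)) < e \<and> opnorm (op_diff (x \<circ> f i) (x \<circ> T)) < e) U"
      using ev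
    proof eventually_elim
      case (elim i)
      have "opnorm (op_diff (f i \<circ> x) (T \<circ> x)) < e"
        by (rule opnorm_lt[where K="e/2"]) (use elim e in \<open>auto simp: op_diff_def\<close>)
      moreover have "opnorm (op_diff (x \<circ> f i) (x \<circ> T)) < e"
        by (rule opnorm_lt[where K="e/2"]) (use elim e in \<open>auto simp: op_diff_def\<close>)
      ultimately show ?case by simp
    qed
  qed
qed

lemma SC_const: "SC (\<lambda>i. T) T"
  unfolding SC_def by (auto simp: hnorm_nonneg)

lemma SC_cong: "SC f T \<Longrightarrow> T = S \<Longrightarrow> SC f S" by simp

lemma SC_diff:
  assumes f: "SC f T" and g: "SC g S"
  shows "SC (\<lambda>i. op_diff (f i) (g i)) (op_diff T S)"
  unfolding SC_def
proof (intro ballI allI impI)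
  fix x e assume x: "x \<in> A" and e: "(e::real) > 0"
  have xb: "bounded_op x" using x by (rule A_bounded)
  have e2: "e/2 > 0" using e by simp
  show "eventually (\<lambda>i. \<forall>v. hnorm (op_diff (f i) (g i) (x v) - op_diff T S (x v)) \<le> e * hnorm v
      \<and> hnorm (x (op_diff (f i) (g i) v) - x (op_diff T S v)) \<le> e * hnorm v) U"
    using SCD[OF f x e2] SCD[OF g x e2]
  proof eventually_elim
    case (elim i)
    show ?case
    proof
      fix v
      have 1: "hnorm (op_diff (f i) (g i) (x v) - op_diff T S (x v)) \<le> e * hnorm v"
      proof -
        have "op_diff (f i) (g i) (x v) - op_diff T S (x v) = (f i (x v) - T (x v)) - (g i (x v) - S (x v))"
          by (simp add: op_diff_def algebra_simps)
        then have "hnorm (op_diff (f i) (g i) (x v) - op_diff T S (x v)) \<le> hnorm (f i (x v) - T (x v)) + hnorm (g i (x v) - S (x v))"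
          using hnorm_diff_le by simp
        then show ?thesis using elim[rule_format, of v] by simp
      qed
      have 2: "hnorm (x (op_diff (f i) (g i) v) - x (op_diff T S v)) \<le> e * hnorm v"
      proof -
        have "x (op_diff (f i) (g i) v) - x (op_diff T S v) = (x (f i v) - x (T v)) - (x (g i v) - x (S v))"
          by (simp add: op_diff_def bop_diff[OF xb] algebra_simps)
        then have "hnorm (x (op_diff (f i) (g i) v) - x (op_diff T S v)) \<le> hnorm (x (f i v) - x (T v)) + hnorm (x (g i v) - x (S v))"
          using hnorm_diff_le by simp
        then show ?thesis using elim[rule_format, of v] by simp
      qed
      show "hnorm (op_diff (f i) (g i) (x v) - op_diff T S (x v)) \<le> e * hnorm v \<and>
         hnorm (x (op_diff (f i) (g i) v) - x (op_diff T S v)) \<le> e * hnorm v" using 1 2 by simp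
    qed
  qed
qed

lemma SC_add:
  assumes f: "SC f T" and g: "SC g S"
  shows "SC (\<lambda>i. op_add (f i) (g i)) (op_add T S)"
  unfolding SC_def
proof (intro ballI allI impI)
  fix x e assume x: "x \<in> A" and e: "(e::real) > 0"
  have xb: "bounded_op x" using x by (rule A_bounded)
  have e2: "e/2 > 0" using e by simp
  show "eventually (\<lambda>i. \<forall>v. hnorm (op_add (f i) (g i) (x v) - op_add T S (x v)) \<le> e * hnorm v
      \<and> hnorm (x (op_add (f i) (g i) v) - x (op_add T S v)) \<le> e * hnorm v) U"
    using SCD[OF f x e2] SCD[OF g x e2]
  proof eventually_elim
    case (elim i)
    show ?case
    proof
      fix v
      have 1: "hnorm (op_add (f i) (g i) (x v) - op_add T S (x v)) \<le> e * hnorm v"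
      proof -
        have "op_add (f i) (g i) (x v) - op_add T S (x v) = (f i (x v) - T (x v)) + (g i (x v) - S (x v))"
          by (simp add: op_add_def algebra_simps)
        then have "hnorm (op_add (f i) (g i) (x v) - op_add T S (x v)) \<le> hnorm (f i (x v) - T (x v)) + hnorm (g i (x v) - S (x v))"
          using hnorm_triangle by simp
        then show ?thesis using elim[rule_format, of v] by simp
      qed
      have 2: "hnorm (x (op_add (f i) (g i) v) - x (op_add T S v)) \<le> e * hnorm v"
      proof -
        have "x (op_add (f i) (g i) v) - x (op_add T S v) = (x (f i v) - x (T v)) + (x (g i v) - x (S v))"
          by (simp add: op_add_def bop_add[OF xb] algebra_simps)
        then have "hnorm (x (op_add (f i) (g i) v) - x (op_add T S v)) \<le> hnorm (x (f i v) - x (T v)) + hnorm (x (g i v) - x (S v))"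
          using hnorm_triangle by simp
        then show ?thesis using elim[rule_format, of v] by simp
      qed
      show "hnorm (op_add (f i) (g i) (x v) - op_add T S (x v)) \<le> e * hnorm v \<and>
         hnorm (x (op_add (f i) (g i) v) - x (op_add T S v)) \<le> e * hnorm v" using 1 2 by simp
    qed
  qed
qed

lemma SC_scale:
  assumes f: "SC f T"
  shows "SC (\<lambda>i. op_scale c (f i)) (op_scale c T)"
  unfolding SC_def
proof (intro ballI allI impI)
  fix x e assume x: "x \<in> A" and e: "(e::real) > 0"
  have xb: "bounded_op x" using x by (rule A_bounded)
  define e' where "e' = e / (cmod c + 1)"
  have cp: "cmod c + 1 > 0" by (simp add: add_nonneg_pos)
  have e': "e' > 0" using e cp by (simp add: e'_def divide_pos_pos)
  have ce: "cmod c * e' \<le> e"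
  proof -
    have "cmod c * e' \<le> (cmod c + 1) * e'" using e' by (intro mult_right_mono) auto
    also have "\<dots> = e" using cp by (simp add: e'_def)
    finally show ?thesis .
  qed
  show "eventually (\<lambda>i. \<forall>v. hnorm (op_scale c (f i) (x v) - op_scale c T (x v)) \<le> e * hnorm v
      \<and> hnorm (x (op_scale c (f i) v) - x (op_scale c T v)) \<le> e * hnorm v) U"
    using SCD[OF f x e']
  proof eventually_elim
    case (elim i)
    show ?case
    proof
      fix v
      have "hnorm (op_scale c (f i) (x v) - op_scale c T (x v)) = cmod c * hnorm (f i (x v) - T (x v))"
        by (simp add: op_scale_def scaleC_diff_right[symmetric] hnorm_scaleC)
      also have "\<dots> \<le> cmod c * (e' * hnorm v)" using elim[rule_format, of v] by (intro mult_left_mono) auto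
      also have "\<dots> \<le> e * hnorm v" using ce hnorm_nonneg[of v] by (simp add: mult.assoc[symmetric] mult_right_mono)
      finally have 1: "hnorm (op_scale c (f i) (x v) - op_scale c T (x v)) \<le> e * hnorm v" .
      have "hnorm (x (op_scale c (f i) v) - x (op_scale c T v)) = cmod c * hnorm (x (f i v) - x (T v))"
        by (simp add: op_scale_def bop_scale[OF xb] scaleC_diff_right[symmetric] hnorm_scaleC)
      also have "\<dots> \<le> cmod c * (e' * hnorm v)" using elim[rule_format, of v] by (intro mult_left_mono) auto
      also have "\<dots> \<le> e * hnorm v" using ce hnorm_nonneg[of v] by (simp add: mult.assoc[symmetric] mult_right_mono)
      finally have 2: "hnorm (x (op_scale c (f i) v) - x (op_scale c T v)) \<le> e * hnorm v" .
      show "hnorm (op_scale c (f i) (x v) - op_scale c T (x v)) \<le> e * hnorm v \<and>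
         hnorm (x (op_scale c (f i) v) - x (op_scale c T v)) \<le> e * hnorm v" using 1 2 by simp
    qed
  qed
qed

end


lemma le_eps: assumes "\<And>e. e > 0 \<Longrightarrow> (a::real) \<le> e * c" "0 \<le> c" shows "a \<le> 0"
proof (rule ccontr)
  assume "\<not> a \<le> 0" then have a: "a > 0" by simp
  define e where "e = a / (2 * (c + 1))"
  have cp: "c + 1 > 0" using assms(2) by simp
  have e: "e > 0" using a cp by (simp add: e_def)
  have "a \<le> e * c" using assms(1)[OF e] .
  also have "e * c \<le> e * (c + 1)" using e by simp
  also have "e * (c + 1) = a / 2" using cp by (simp add: e_def field_simps)
  finally show False using a by simp
qed

lemma half_bound: assumes "0 \<le> (M::real)" "e > 0" shows "M * (e / (2 * (M + 1))) \<le> e / 2"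
proof -
  have mp: "M + 1 > 0" using assms by simp
  have "M * (e / (2 * (M + 1))) = (e / 2) * (M / (M + 1))" by (simp add: field_simps)
  also have "\<dots> \<le> (e / 2) * 1" using mp assms by (intro mult_left_mono) (auto simp: divide_le_eq)
  finally show ?thesis by simp
qed

lemma half_pos: assumes "0 \<le> (M::real)" "e > 0" shows "e / (2 * (M + 1)) > 0"
proof -
  have mp: "2 * (M + 1) > 0" using assms by simp
  then show ?thesis using assms by (simp add: divide_pos_pos)
qed

context setting begin

lemma bnd_apply: "bounded_op f \<Longrightarrow> opnorm f \<le> M \<Longrightarrow> hnorm (f v) \<le> M * hnorm v"
  using opnorm_bound[of f v] mult_right_mono[of "opnorm f" M "hnorm v"] hnorm_nonneg[of v] by linarith

lemma SC_mul:
  assumes f: "SC f T" and g: "SC g S"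
    and fA: "\<And>i. f i \<in> A" and gA: "\<And>i. g i \<in> A"
    and Mf: "\<And>i. opnorm (f i) \<le> Mf" and Mg: "\<And>i. opnorm (g i) \<le> Mg" and Mf0: "0 \<le> Mf" and Mg0: "0 \<le> Mg"
    and SA: "\<And>x. x \<in> A \<Longrightarrow> S \<circ> x \<in> A" and TA: "\<And>x. x \<in> A \<Longrightarrow> x \<circ> T \<in> A"
  shows "SC (\<lambda>i. f i \<circ> g i) (T \<circ> S)"
  unfolding SC_def
proof (intro ballI allI impI)
  fix x e assume x: "x \<in> A" and e: "(e::real) > 0"
  have xb: "bounded_op x" using x by (rule A_bounded)
  define e1 where "e1 = e / (2 * (Mf + 1))"
  define e3 where "e3 = e / (2 * (Mg + 1))"
  have e1: "e1 > 0" unfolding e1_def by (rule half_pos[OF Mf0 e])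
  have e3: "e3 > 0" unfolding e3_def by (rule half_pos[OF Mg0 e])
  have e2: "e / 2 > 0" using e by simp
  have Me1: "Mf * e1 \<le> e / 2" unfolding e1_def by (rule half_bound[OF Mf0 e])
  have Me3: "Mg * e3 \<le> e / 2" unfolding e3_def by (rule half_bound[OF Mg0 e])
  show "eventually (\<lambda>i. \<forall>v. hnorm ((f i \<circ> g i) (x v) - (T \<circ> S) (x v)) \<le> e * hnorm v
      \<and> hnorm (x ((f i \<circ> g i) v) - x ((T \<circ> S) v)) \<le> e * hnorm v) U"
    using SCD[OF g x e1] SCD[OF f SA[OF x] e2] SCD[OF f x e3] SCD[OF g TA[OF x] e2]
  proof eventually_elim
    case (elim i)
    have fb: "bounded_op (f i)" using fA by (rule A_bounded)
    have gb: "bounded_op (g i)" using gA by (rule A_bounded)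
    show ?case
    proof
      fix v
      have r1: "hnorm (g i (x v) - S (x v)) \<le> e1 * hnorm v" using elim(1) by blast
      have r2: "hnorm (f i ((S \<circ> x) v) - T ((S \<circ> x) v)) \<le> e / 2 * hnorm v" using elim(2) by blast
      have eq: "(f i \<circ> g i) (x v) - (T \<circ> S) (x v) = f i (g i (x v) - S (x v)) + (f i ((S \<circ> x) v) - T ((S \<circ> x) v))"
        by (simp add: bop_diff[OF fb])
      have "hnorm ((f i \<circ> g i) (x v) - (T \<circ> S) (x v)) \<le> hnorm (f i (g i (x v) - S (x v))) + hnorm (f i ((S \<circ> x) v) - T ((S \<circ> x) v))"
        unfolding eq by (rule hnorm_triangle)
      also have "hnorm (f i (g i (x v) - S (x v))) \<le> Mf * hnorm (g i (x v) - S (x v))"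
        by (rule bnd_apply[OF fb Mf])
      also have "Mf * hnorm (g i (x v) - S (x v)) \<le> Mf * (e1 * hnorm v)"
        using r1 Mf0 by (rule mult_left_mono)
      also have "Mf * (e1 * hnorm v) \<le> e / 2 * hnorm v"
        using mult_right_mono[OF Me1 hnorm_nonneg[of v]] by (simp add: mult.assoc)
      finally have 1: "hnorm ((f i \<circ> g i) (x v) - (T \<circ> S) (x v)) \<le> e * hnorm v" using r2 by simp
      have l1: "hnorm (x (f i (g i v)) - x (T (g i v))) \<le> e3 * hnorm (g i v)" using elim(3) by blast
      have l2: "hnorm ((x \<circ> T) (g i v) - (x \<circ> T) (S v)) \<le> e / 2 * hnorm v" using elim(4) by blast
      have eq2: "x ((f i \<circ> g i) v) - x ((T \<circ> S) v) = (x (f i (g i v)) - x (T (g i v))) + ((x \<circ> T) (g i v) - (x \<circ> T) (S v))"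
        by simp
      have "hnorm (x ((f i \<circ> g i) v) - x ((T \<circ> S) v)) \<le> hnorm (x (f i (g i v)) - x (T (g i v))) + hnorm ((x \<circ> T) (g i v) - (x \<circ> T) (S v))"
        unfolding eq2 by (rule hnorm_triangle)
      also have "hnorm (x (f i (g i v)) - x (T (g i v))) \<le> e3 * (Mg * hnorm v)"
        using l1 bnd_apply[OF gb Mg, of v] e3 by (meson mult_left_mono less_imp_le order_trans)
      also have "e3 * (Mg * hnorm v) \<le> e / 2 * hnorm v"
        using mult_right_mono[OF Me3 hnorm_nonneg[of v]] by (simp add: ac_simps)
      finally have 2: "hnorm (x ((f i \<circ> g i) v) - x ((T \<circ> S) v)) \<le> e * hnorm v" using l2 by simp
      show "hnorm ((f i \<circ> g i) (x v) - (T \<circ> S) (x v)) \<le> e * hnorm v \<and>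
         hnorm (x ((f i \<circ> g i) v) - x ((T \<circ> S) v)) \<le> e * hnorm v" using 1 2 by simp
    qed
  qed
qed

lemma SC_in_A:
  assumes f: "SC f T" and fA: "\<And>i. f i \<in> A" and T: "bounded_op T" and x: "x \<in> A"
  shows "T \<circ> x \<in> A" "x \<circ> T \<in> A"
proof -
  have xb: "bounded_op x" using x by (rule A_bounded)
  show "T \<circ> x \<in> A"
  proof (rule A_closed)
    show "bounded_op (T \<circ> x)" by (rule bounded_op_comp[OF T xb])
  next
    fix e :: real assume e: "e > 0"
    then have e2: "e/2 > 0" by simp
    obtain i where i: "\<forall>v. hnorm (f i (x v) - T (x v)) \<le> e/2 * hnorm v \<and> hnorm (x (f i v) - x (T v)) \<le> e/2 * hnorm v"
      using eventually_happens'[OF Ubot SCD[OF f x e2]] by blast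
    have "opnorm (op_diff (T \<circ> x) (f i \<circ> x)) < e"
    proof (rule opnorm_lt[where K="e/2"])
      fix v show "hnorm (op_diff (T \<circ> x) (f i \<circ> x) v) \<le> e / 2 * hnorm v"
        using i hnorm_diff_commute[of "T (x v)" "f i (x v)"] by (simp add: op_diff_def)
    qed (use e in auto)
    then show "\<exists>a\<in>A. opnorm (op_diff (T \<circ> x) a) < e" using A_comp[OF fA x] by blast
  qed
  show "x \<circ> T \<in> A"
  proof (rule A_closed)
    show "bounded_op (x \<circ> T)" by (rule bounded_op_comp[OF xb T])
  next
    fix e :: real assume e: "e > 0"
    then have e2: "e/2 > 0" by simp
    obtain i where i: "\<forall>v. hnorm (f i (x v) - T (x v)) \<le> e/2 * hnorm v \<and> hnorm (x (f i v) - x (T v)) \<le> e/2 * hnorm v"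
      using eventually_happens'[OF Ubot SCD[OF f x e2]] by blast
    have "opnorm (op_diff (x \<circ> T) (x \<circ> f i)) < e"
    proof (rule opnorm_lt[where K="e/2"])
      fix v show "hnorm (op_diff (x \<circ> T) (x \<circ> f i) v) \<le> e / 2 * hnorm v"
        using i hnorm_diff_commute[of "x (T v)" "x (f i v)"] by (simp add: op_diff_def)
    qed (use e in auto)
    then show "\<exists>a\<in>A. opnorm (op_diff (x \<circ> T) a) < e" using A_comp[OF x fA] by blast
  qed
qed

lemma span_zero:
  assumes R: "bounded_op R" and z: "\<And>x v. x \<in> A \<Longrightarrow> R (x v) = 0"
    and ps: "\<forall>(c, a, \<eta>) \<in> set ps. a \<in> A"
  shows "R (sum_list (map (\<lambda>(c, a, \<eta>). scaleC c (a \<eta>)) ps)) = 0"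
  using ps
proof (induction ps)
  case Nil then show ?case by (simp add: bop_zero[OF R])
next
  case (Cons p ps)
  obtain c a \<eta> where p: "p = (c, a, \<eta>)" by (cases p) auto
  have a: "a \<in> A" using Cons.prems p by auto
  have "R (sum_list (map (\<lambda>(c, a, \<eta>). scaleC c (a \<eta>)) (p # ps)))
      = scaleC c (R (a \<eta>)) + R (sum_list (map (\<lambda>(c, a, \<eta>). scaleC c (a \<eta>)) ps))"
    by (simp add: p bop_add[OF R] bop_scale[OF R])
  also have "\<dots> = 0" using Cons z[OF a] by simp
  finally show ?case .
qed

lemma nondeg_zero:
  assumes R: "bounded_op R" and z: "\<And>x v. x \<in> A \<Longrightarrow> R (x v) = 0"
  shows "R \<xi> = 0"
proof -
  have "hnorm (R \<xi>) \<le> 0"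
  proof (rule le_eps[where c="opnorm R"])
    fix e :: real assume e: "e > 0"
    obtain ps :: "(complex \<times> ('h \<Rightarrow> 'h) \<times> 'h) list" where ps: "\<forall>(c, a, \<eta>) \<in> set ps. a \<in> A"
      and cl: "hnorm (\<xi> - sum_list (map (\<lambda>(c, a, \<eta>). scaleC c (a \<eta>)) ps)) < e"
      using nd e unfolding nondegenerate_def by blast
    define s where "s = sum_list (map (\<lambda>(c, a, \<eta>). scaleC c (a \<eta>)) ps)"
    have "R s = 0" unfolding s_def using span_zero[where R=R and ps=ps] R z ps by blast
    then have "R \<xi> = R (\<xi> - s)" by (simp add: bop_diff[OF R])
    then have "hnorm (R \<xi>) \<le> opnorm R * hnorm (\<xi> - s)" using opnorm_bound[OF R] by simp
    also have "\<dots> \<le> opnorm R * e" using cl opnorm_nonneg[OF R] unfolding s_def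
      by (intro mult_left_mono) auto
    finally show "hnorm (R \<xi>) \<le> e * opnorm R" by (simp add: mult.commute)
  qed (rule opnorm_nonneg[OF R])
  then show ?thesis using hnorm_nonneg[of "R \<xi>"] hnorm_eq_zero by (metis antisym)
qed

lemma SC_unique:
  assumes f: "SC f T" and g: "SC f S" and T: "bounded_op T" and S: "bounded_op S"
  shows "T = S"
proof -
  have R: "bounded_op (op_diff T S)" by (rule bounded_op_diff[OF T S])
  have z: "op_diff T S (x v) = 0" if x: "x \<in> A" for x v
  proof -
    have "hnorm (T (x v) - S (x v)) \<le> 0"
    proof (rule le_eps[where c="2 * hnorm v"])
      fix e :: real assume e: "e > 0"
      obtain i where i1: "hnorm (f i (x v) - T (x v)) \<le> e * hnorm v"
        and i2: "hnorm (f i (x v) - S (x v)) \<le> e * hnorm v"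
        using eventually_happens'[OF Ubot eventually_conj[OF SCD[OF f x e] SCD[OF g x e]]] by blast
      have "hnorm (T (x v) - S (x v)) \<le> hnorm (T (x v) - f i (x v)) + hnorm (f i (x v) - S (x v))"
        by (rule hnorm_triangle_diff)
      then show "hnorm (T (x v) - S (x v)) \<le> e * (2 * hnorm v)"
        using i1 i2 hnorm_diff_commute[of "T (x v)" "f i (x v)"] by simp
    qed (simp add: hnorm_nonneg)
    then have "hnorm (T (x v) - S (x v)) = 0" using hnorm_nonneg[of "T (x v) - S (x v)"] by linarith
    then have "T (x v) - S (x v) = 0" by (simp add: hnorm_eq_zero)
    then show ?thesis by (simp add: op_diff_def)
  qed
  have "op_diff T S \<xi> = 0" for \<xi> using nondeg_zero[where R="op_diff T S"] R z by blast
  then show ?thesis by (intro ext) (simp add: op_diff_def)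
qed

end


context setting begin

abbreviation spansum :: "(complex \<times> ('h \<Rightarrow> 'h) \<times> 'h) list \<Rightarrow> 'h" where
  "spansum ps \<equiv> sum_list (map (\<lambda>(c, a, \<eta>). scaleC c (a \<eta>)) ps)"

lemma strong_span:
  assumes c: "SC c S" and cA: "\<And>i. c i \<in> A" and S: "bounded_op S"
  shows "\<forall>(k, a, \<eta>) \<in> set ps. a \<in> A \<Longrightarrow> \<delta> > 0 \<Longrightarrow> eventually (\<lambda>i. hnorm (c i (spansum ps) - S (spansum ps)) \<le> \<delta>) U"
proof (induction ps arbitrary: \<delta>)
  case Nil
  have "c i 0 = 0" for i using A_bounded[OF cA] by (rule bop_zero)
  then show ?case using Nil bop_zero[OF S] by simp
next
  case (Cons p ps)
  obtain k a \<eta> where p: "p = (k, a, \<eta>)" by (cases p) auto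
  have a: "a \<in> A" using Cons.prems p by auto
  have ps: "\<forall>(k, a, \<eta>) \<in> set ps. a \<in> A" using Cons.prems by auto
  have d2: "\<delta> / 2 > 0" using Cons.prems by simp
  define M where "M = cmod k * hnorm \<eta>"
  have M0: "0 \<le> M" by (simp add: M_def hnorm_nonneg)
  define e' where "e' = \<delta> / (2 * (M + 1))"
  have e': "e' > 0" unfolding e'_def by (rule half_pos[OF M0 Cons.prems(2)])
  have Me: "M * e' \<le> \<delta> / 2" unfolding e'_def by (rule half_bound[OF M0 Cons.prems(2)])
  show ?case
    using Cons.IH[OF ps d2] SCD[OF c a e']
  proof eventually_elim
    case (elim i)
    have cb: "bounded_op (c i)" using cA by (rule A_bounded)
    have eq: "c i (spansum (p # ps)) - S (spansum (p # ps))
        = scaleC k (c i (a \<eta>) - S (a \<eta>)) + (c i (spansum ps) - S (spansum ps))"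
      by (simp add: p bop_add[OF cb] bop_add[OF S] bop_scale[OF cb] bop_scale[OF S] scaleC_diff_right)
    have "hnorm (c i (spansum (p # ps)) - S (spansum (p # ps)))
        \<le> hnorm (scaleC k (c i (a \<eta>) - S (a \<eta>))) + hnorm (c i (spansum ps) - S (spansum ps))"
      unfolding eq by (rule hnorm_triangle)
    also have "hnorm (scaleC k (c i (a \<eta>) - S (a \<eta>))) = cmod k * hnorm (c i (a \<eta>) - S (a \<eta>))"
      by (rule hnorm_scaleC)
    also have "cmod k * hnorm (c i (a \<eta>) - S (a \<eta>)) \<le> cmod k * (e' * hnorm \<eta>)"
      using elim(2) by (intro mult_left_mono) auto
    also have "cmod k * (e' * hnorm \<eta>) = M * e'" by (simp add: M_def ac_simps)
    finally show ?case using elim(1) Me by simp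
  qed
qed

lemma norm_lsc:
  assumes c: "SC c S" and cA: "\<And>i. c i \<in> A" and S: "bounded_op S"
    and L: "((\<lambda>i. opnorm (c i)) \<longlongrightarrow> L) U"
  shows "opnorm S \<le> L"
proof -
  have L0: "0 \<le> L"
    by (rule tendsto_lowerbound[OF L]) (use Ubot opnorm_nonneg A_bounded[OF cA] in \<open>auto intro: always_eventually\<close>)
  define K where "K = opnorm S"
  have K0: "0 \<le> K" unfolding K_def by (rule opnorm_nonneg[OF S])
  show ?thesis
  proof (rule opnorm_le[OF _ L0])
    fix \<xi> :: 'h
    define h where "h = hnorm \<xi>"
    have h0: "0 \<le> h" by (simp add: h_def hnorm_nonneg)
    have "hnorm (S \<xi>) - L * h \<le> 0"
    proof (rule le_eps[where c="L + h + 2 + K"])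
      fix e :: real assume e: "e > 0"
      define \<epsilon> where "\<epsilon> = min e 1"
      have \<epsilon>0: "\<epsilon> > 0" and \<epsilon>1: "\<epsilon> \<le> 1" and \<epsilon>e: "\<epsilon> \<le> e" using e by (auto simp: \<epsilon>_def)
      obtain ps :: "(complex \<times> ('h \<Rightarrow> 'h) \<times> 'h) list" where ps: "\<forall>(c, a, \<eta>) \<in> set ps. a \<in> A"
        and cl: "hnorm (\<xi> - spansum ps) < \<epsilon>"
        using nd \<epsilon>0 unfolding nondegenerate_def by blast
      define s where "s = spansum ps"
      have ev1: "eventually (\<lambda>i. hnorm (c i s - S s) \<le> \<epsilon>) U"
        unfolding s_def by (rule strong_span[OF c cA S ps \<epsilon>0])
      have ev2: "eventually (\<lambda>i. opnorm (c i) < L + \<epsilon>) U"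
        using order_tendstoD(2)[OF L] \<epsilon>0 by simp
      obtain i where i1: "hnorm (c i s - S s) \<le> \<epsilon>" and i2: "opnorm (c i) < L + \<epsilon>"
        using eventually_happens'[OF Ubot eventually_conj[OF ev1 ev2]] by blast
      have cb: "bounded_op (c i)" using cA by (rule A_bounded)
      have cl': "hnorm (\<xi> - s) \<le> \<epsilon>" using cl by (simp add: s_def)
      have 1: "hnorm (S \<xi>) \<le> hnorm (S s) + hnorm (S (\<xi> - s))"
        using hnorm_triangle[of "S s" "S (\<xi> - s)"] by (simp add: bop_diff[OF S])
      have 2: "hnorm (S s) \<le> hnorm (c i s) + hnorm (c i s - S s)"
        using hnorm_diff_le[of "c i s" "c i s - S s"] by simp
      have 3: "hnorm (c i s) \<le> opnorm (c i) * hnorm s" by (rule opnorm_bound[OF cb])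
      have 4: "opnorm (c i) * hnorm s \<le> (L + \<epsilon>) * hnorm s"
        using i2 hnorm_nonneg[of s] by (intro mult_right_mono) auto
      have 5: "hnorm s \<le> h + \<epsilon>"
        using hnorm_diff_le[of \<xi> "\<xi> - s"] cl' by (simp add: h_def)
      have 6: "(L + \<epsilon>) * hnorm s \<le> (L + \<epsilon>) * (h + \<epsilon>)"
        using 5 L0 \<epsilon>0 by (intro mult_left_mono) auto
      have 7: "hnorm (S (\<xi> - s)) \<le> K * \<epsilon>"
        using opnorm_bound[OF S, of "\<xi> - s"] mult_left_mono[OF cl' K0] by (simp add: K_def)
      have 8: "(L + \<epsilon>) * (h + \<epsilon>) = L * h + \<epsilon> * L + \<epsilon> * h + \<epsilon> * \<epsilon>" by (simp add: algebra_simps)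
      have 9: "\<epsilon> * \<epsilon> \<le> \<epsilon> * 1" using \<epsilon>1 \<epsilon>0 by (intro mult_left_mono) auto
      have 10: "\<epsilon> * (L + h + 2 + K) \<le> e * (L + h + 2 + K)"
        using \<epsilon>e L0 h0 K0 by (intro mult_right_mono) auto
      have 11: "\<epsilon> * (L + h + 2 + K) = \<epsilon> * L + \<epsilon> * h + 2 * \<epsilon> + K * \<epsilon>" by (simp add: algebra_simps)
      show "hnorm (S \<xi>) - L * h \<le> e * (L + h + 2 + K)"
        using 1 2 3 4 6 7 8 9 10 11 i1 by linarith
    qed (use L0 h0 K0 in simp)
    then show "hnorm (S \<xi>) \<le> L * hnorm \<xi>" by (simp add: h_def)
  qed
qed

end


context setting begin

definition cls :: "('h \<Rightarrow> 'h) \<Rightarrow> ('i \<Rightarrow> 'h \<Rightarrow> 'h) set" where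
  "cls T = {h \<in> sfam U A. SC h T}"

lemma sfam_char:
  "f \<in> sfam U A \<longleftrightarrow> (\<forall>i. f i \<in> A) \<and> (\<exists>M. \<forall>i. opnorm (f i) \<le> M) \<and> (\<exists>T. bounded_op T \<and> SC f T)"
proof -
  have "(\<forall>i. f i \<in> A) \<Longrightarrow> bounded_op T \<Longrightarrow> strict_conv U A f T \<longleftrightarrow> SC f T" for T
    by (rule SC_strict) (auto intro: A_bounded)
  then show ?thesis unfolding sfam_def bdd_family_def by auto
qed

lemma sfamI: "(\<And>i. f i \<in> A) \<Longrightarrow> (\<And>i. opnorm (f i) \<le> M) \<Longrightarrow> bounded_op T \<Longrightarrow> SC f T \<Longrightarrow> f \<in> sfam U A"
  unfolding sfam_char by blast

lemma sfamD:
  assumes "f \<in> sfam U A"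
  shows "\<And>i. f i \<in> A" "\<exists>M\<ge>0. \<forall>i. opnorm (f i) \<le> M" "\<exists>T. bounded_op T \<and> SC f T"
proof -
  show fA: "\<And>i. f i \<in> A" using assms unfolding sfam_char by blast
  obtain M where M: "\<forall>i. opnorm (f i) \<le> M" using assms unfolding sfam_char by blast
  have "\<forall>i. opnorm (f i) \<le> max M 0" using M by (meson max.cobounded1 order_trans)
  then show "\<exists>M\<ge>0. \<forall>i. opnorm (f i) \<le> M" by (intro exI[of _ "max M 0"]) auto
  show "\<exists>T. bounded_op T \<and> SC f T" using assms unfolding sfam_char by blast
qed

lemma jfam_char: "f \<in> jfam U A \<longleftrightarrow> f \<in> sfam U A \<and> SC f op_zero"
proof -
  have "f \<in> sfam U A \<Longrightarrow> strict_conv U A f op_zero \<longleftrightarrow> SC f op_zero"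
    by (rule SC_strict) (auto intro: A_bounded sfamD bounded_op_zero)
  then show ?thesis unfolding jfam_def by auto
qed

lemma sfam_const: "a \<in> A \<Longrightarrow> (\<lambda>i. a) \<in> sfam U A"
  by (rule sfamI[where M="opnorm a" and T=a]) (auto intro: A_bounded SC_const)

lemma sfam_diff:
  assumes f: "f \<in> sfam U A" and g: "g \<in> sfam U A" and T: "SC f T" and S: "SC g S"
    and Tb: "bounded_op T" and Sb: "bounded_op S"
  shows "(\<lambda>i. op_diff (f i) (g i)) \<in> sfam U A" "SC (\<lambda>i. op_diff (f i) (g i)) (op_diff T S)"
proof -
  obtain Mf where Mf: "\<forall>i. opnorm (f i) \<le> Mf" using sfamD(2)[OF f] by blast
  obtain Mg where Mg: "\<forall>i. opnorm (g i) \<le> Mg" using sfamD(2)[OF g] by blast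
  show sc: "SC (\<lambda>i. op_diff (f i) (g i)) (op_diff T S)" by (rule SC_diff[OF T S])
  show "(\<lambda>i. op_diff (f i) (g i)) \<in> sfam U A"
  proof (rule sfamI[where M="Mf + Mg"])
    fix i show "op_diff (f i) (g i) \<in> A" using sfamD(1)[OF f] sfamD(1)[OF g] by (rule A_diff)
    show "opnorm (op_diff (f i) (g i)) \<le> Mf + Mg"
      using opnorm_diff[OF A_bounded[OF sfamD(1)[OF f]] A_bounded[OF sfamD(1)[OF g]], of i i] Mf Mg
      by (meson add_mono order_trans)
  qed (rule bounded_op_diff[OF Tb Sb], rule sc)
qed

lemma sfam_add:
  assumes f: "f \<in> sfam U A" and g: "g \<in> sfam U A" and T: "SC f T" and S: "SC g S"
    and Tb: "bounded_op T" and Sb: "bounded_op S"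
  shows "(\<lambda>i. op_add (f i) (g i)) \<in> sfam U A" "SC (\<lambda>i. op_add (f i) (g i)) (op_add T S)"
proof -
  obtain Mf where Mf: "\<forall>i. opnorm (f i) \<le> Mf" using sfamD(2)[OF f] by blast
  obtain Mg where Mg: "\<forall>i. opnorm (g i) \<le> Mg" using sfamD(2)[OF g] by blast
  show sc: "SC (\<lambda>i. op_add (f i) (g i)) (op_add T S)" by (rule SC_add[OF T S])
  show "(\<lambda>i. op_add (f i) (g i)) \<in> sfam U A"
  proof (rule sfamI[where M="Mf + Mg"])
    fix i show "op_add (f i) (g i) \<in> A" using sfamD(1)[OF f] sfamD(1)[OF g] by (rule A_add)
    show "opnorm (op_add (f i) (g i)) \<le> Mf + Mg"
      using opnorm_add[OF A_bounded[OF sfamD(1)[OF f]] A_bounded[OF sfamD(1)[OF g]], of i i] Mf Mg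
      by (meson add_mono order_trans)
  qed (rule bounded_op_add[OF Tb Sb], rule sc)
qed

lemma sfam_scale:
  assumes f: "f \<in> sfam U A" and T: "SC f T" and Tb: "bounded_op T"
  shows "(\<lambda>i. op_scale c (f i)) \<in> sfam U A" "SC (\<lambda>i. op_scale c (f i)) (op_scale c T)"
proof -
  obtain Mf where Mf: "\<forall>i. opnorm (f i) \<le> Mf" using sfamD(2)[OF f] by blast
  show sc: "SC (\<lambda>i. op_scale c (f i)) (op_scale c T)" by (rule SC_scale[OF T])
  show "(\<lambda>i. op_scale c (f i)) \<in> sfam U A"
  proof (rule sfamI[where M="cmod c * Mf"])
    fix i show "op_scale c (f i) \<in> A" using sfamD(1)[OF f] by (rule A_scale)
    have fb: "bounded_op (f i)" using sfamD(1)[OF f] by (rule A_bounded)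
    show "opnorm (op_scale c (f i)) \<le> cmod c * Mf"
    proof (rule opnorm_le)
      fix v
      have "hnorm (op_scale c (f i) v) = cmod c * hnorm (f i v)" by (simp add: op_scale_def hnorm_scaleC)
      also have "\<dots> \<le> cmod c * (Mf * hnorm v)" using bnd_apply[OF fb, of Mf v] Mf by (intro mult_left_mono) auto
      finally show "hnorm (op_scale c (f i) v) \<le> cmod c * Mf * hnorm v" by (simp add: mult.assoc)
    next
      show "0 \<le> cmod c * Mf" using Mf opnorm_nonneg[OF fb] by (meson mult_nonneg_nonneg norm_ge_zero order_trans)
    qed
  qed (rule bounded_op_scale[OF Tb], rule sc)
qed

lemma lim_in_A:
  assumes f: "f \<in> sfam U A" and T: "SC f T" and Tb: "bounded_op T" and x: "x \<in> A"
  shows "T \<circ> x \<in> A" "x \<circ> T \<in> A"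
  using SC_in_A[OF T sfamD(1)[OF f] Tb x] by auto

lemma sfam_mul:
  assumes f: "f \<in> sfam U A" and g: "g \<in> sfam U A" and T: "SC f T" and S: "SC g S"
    and Tb: "bounded_op T" and Sb: "bounded_op S"
  shows "(\<lambda>i. f i \<circ> g i) \<in> sfam U A" "SC (\<lambda>i. f i \<circ> g i) (T \<circ> S)"
proof -
  obtain Mf where Mf: "\<forall>i. opnorm (f i) \<le> Mf" "0 \<le> Mf" using sfamD(2)[OF f] by blast
  obtain Mg where Mg: "\<forall>i. opnorm (g i) \<le> Mg" "0 \<le> Mg" using sfamD(2)[OF g] by blast
  show sc: "SC (\<lambda>i. f i \<circ> g i) (T \<circ> S)"
    by (rule SC_mul[where Mf=Mf and Mg=Mg, OF T S sfamD(1)[OF f] sfamD(1)[OF g]])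
       (use Mf Mg lim_in_A[OF g S Sb] lim_in_A[OF f T Tb] in auto)
  show "(\<lambda>i. f i \<circ> g i) \<in> sfam U A"
  proof (rule sfamI[where M="Mf * Mg"])
    fix i show "f i \<circ> g i \<in> A" using sfamD(1)[OF f] sfamD(1)[OF g] by (rule A_comp)
    have "opnorm (f i \<circ> g i) \<le> opnorm (f i) * opnorm (g i)"
      by (rule opnorm_comp) (use sfamD(1)[OF f] sfamD(1)[OF g] in \<open>auto intro: A_bounded\<close>)
    also have "\<dots> \<le> Mf * Mg"
      using Mf Mg opnorm_nonneg A_bounded sfamD(1)[OF f] sfamD(1)[OF g] by (meson mult_mono)
    finally show "opnorm (f i \<circ> g i) \<le> Mf * Mg" .
  qed (rule bounded_op_comp[OF Tb Sb], rule sc)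
qed

lemma qcls_eq:
  assumes f: "f \<in> sfam U A" and T: "SC f T" and Tb: "bounded_op T"
  shows "qcls U A f = cls T"
proof (rule set_eqI)
  fix h
  show "h \<in> qcls U A f \<longleftrightarrow> h \<in> cls T"
  proof
    assume "h \<in> qcls U A f"
    then have h: "h \<in> sfam U A" and d: "(\<lambda>i. op_diff (f i) (h i)) \<in> jfam U A"
      unfolding qcls_def by auto
    obtain S where Sb: "bounded_op S" and S: "SC h S" using sfamD(3)[OF h] by blast
    have d0: "SC (\<lambda>i. op_diff (f i) (h i)) op_zero" using d unfolding jfam_char by blast
    have dT: "SC (\<lambda>i. op_diff (f i) (h i)) (op_diff T S)" by (rule SC_diff[OF T S])
    have "op_diff T S = op_zero"
      by (rule SC_unique[OF dT d0 bounded_op_diff[OF Tb Sb] bounded_op_zero])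
    then have "T = S" unfolding op_diff_def op_zero_def by (metis eq_iff_diff_eq_0 ext)
    then show "h \<in> cls T" using h S by (simp add: cls_def)
  next
    assume "h \<in> cls T"
    then have h: "h \<in> sfam U A" and hT: "SC h T" unfolding cls_def by auto
    have "(\<lambda>i. op_diff (f i) (h i)) \<in> sfam U A" by (rule sfam_diff(1)[OF f h T hT Tb Tb])
    moreover have "SC (\<lambda>i. op_diff (f i) (h i)) (op_diff T T)" by (rule SC_diff[OF T hT])
    moreover have "op_diff T T = op_zero" by (rule ext) (simp add: op_diff_def op_zero_def)
    ultimately have "(\<lambda>i. op_diff (f i) (h i)) \<in> jfam U A" unfolding jfam_char by simp
    then show "h \<in> qcls U A f" using h unfolding qcls_def by simp
  qed
qed

lemma cls_unique:
  assumes "f \<in> cls T" "g \<in> cls S" "bounded_op T" "bounded_op S" "cls T = cls S"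
  shows "T = S"
proof -
  have "f \<in> cls S" using assms by simp
  then have "SC f S" by (simp add: cls_def)
  moreover have "SC f T" using assms(1) by (simp add: cls_def)
  ultimately show ?thesis using SC_unique assms(3,4) by blast
qed

lemma qrep_in: "f \<in> cls T \<Longrightarrow> qrep (cls T) \<in> cls T"
  unfolding qrep_def using someI[of "\<lambda>f. f \<in> cls T"] by blast

lemma quot_char:
  assumes "X \<in> quot U A"
  obtains T f where "bounded_op T" "f \<in> cls T" "X = cls T"
proof -
  obtain f where f: "f \<in> sfam U A" and X: "X = qcls U A f" using assms unfolding quot_def by auto
  obtain T where Tb: "bounded_op T" and T: "SC f T" using sfamD(3)[OF f] by blast
  show ?thesis using that[OF Tb, of f] qcls_eq[OF f T Tb] X f T by (simp add: cls_def)
qed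

lemma cls_quot: "f \<in> cls T \<Longrightarrow> bounded_op T \<Longrightarrow> cls T \<in> quot U A"
  unfolding quot_def cls_def using qcls_eq[of f T] by (simp add: cls_def) blast

lemma const_embed_eq: "a \<in> A \<Longrightarrow> const_embed U A a = cls a"
  unfolding const_embed_def by (rule qcls_eq[OF sfam_const]) (auto intro: SC_const A_bounded)

lemma const_in_cls: "a \<in> A \<Longrightarrow> (\<lambda>i. a) \<in> cls a"
  unfolding cls_def by (auto intro: sfam_const SC_const)

lemma qzero_eq: "qzero U A = cls op_zero"
  using const_embed_eq[OF A_zero] unfolding qzero_def const_embed_def .

lemma rep_props:
  assumes "f \<in> cls T"
  shows "qrep (cls T) \<in> sfam U A" "SC (qrep (cls T)) T"
  using qrep_in[OF assms] unfolding cls_def by auto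

lemma qadd_cls:
  assumes "f \<in> cls T" "g \<in> cls S" "bounded_op T" "bounded_op S"
  shows "qadd U A (cls T) (cls S) = cls (op_add T S)"
  unfolding qadd_def
  by (rule qcls_eq[OF sfam_add(1)[OF rep_props(1)[OF assms(1)] rep_props(1)[OF assms(2)] rep_props(2)[OF assms(1)] rep_props(2)[OF assms(2)] assms(3,4)]
                   sfam_add(2)[OF rep_props(1)[OF assms(1)] rep_props(1)[OF assms(2)] rep_props(2)[OF assms(1)] rep_props(2)[OF assms(2)] assms(3,4)]
                   bounded_op_add[OF assms(3,4)]])

lemma qdiff_cls:
  assumes "f \<in> cls T" "g \<in> cls S" "bounded_op T" "bounded_op S"
  shows "qdiff U A (cls T) (cls S) = cls (op_diff T S)"
  unfolding qdiff_def
  by (rule qcls_eq[OF sfam_diff(1)[OF rep_props(1)[OF assms(1)] rep_props(1)[OF assms(2)] rep_props(2)[OF assms(1)] rep_props(2)[OF assms(2)] assms(3,4)]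
                   sfam_diff(2)[OF rep_props(1)[OF assms(1)] rep_props(1)[OF assms(2)] rep_props(2)[OF assms(1)] rep_props(2)[OF assms(2)] assms(3,4)]
                   bounded_op_diff[OF assms(3,4)]])

lemma qmul_cls:
  assumes "f \<in> cls T" "g \<in> cls S" "bounded_op T" "bounded_op S"
  shows "qmul U A (cls T) (cls S) = cls (T \<circ> S)"
  unfolding qmul_def
  by (rule qcls_eq[OF sfam_mul(1)[OF rep_props(1)[OF assms(1)] rep_props(1)[OF assms(2)] rep_props(2)[OF assms(1)] rep_props(2)[OF assms(2)] assms(3,4)]
                   sfam_mul(2)[OF rep_props(1)[OF assms(1)] rep_props(1)[OF assms(2)] rep_props(2)[OF assms(1)] rep_props(2)[OF assms(2)] assms(3,4)]
                   bounded_op_comp[OF assms(3,4)]])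

lemma qscale_cls:
  assumes "f \<in> cls T" "bounded_op T"
  shows "qscale U A c (cls T) = cls (op_scale c T)"
  unfolding qscale_def
  by (rule qcls_eq[OF sfam_scale(1)[OF rep_props(1)[OF assms(1)] rep_props(2)[OF assms(1)] assms(2)]
                   sfam_scale(2)[OF rep_props(1)[OF assms(1)] rep_props(2)[OF assms(1)] assms(2)]
                   bounded_op_scale[OF assms(2)]])

end


theorem lemma2p5:
  fixes U :: "'i filter" and A :: "('h::complex_hilbert \<Rightarrow> 'h) set"
  assumes "ultrafilter U"
    and "cstar_subalgebra A"
    and "nondegenerate A"
  shows "qideal U A (const_embed U A ` A) \<and> qclosed U A (const_embed U A ` A)
         \<and> qessential U A (const_embed U A ` A)"
proof -
  interpret S: setting U A by unfold_locales (rule assms)+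
  let ?E = "const_embed U A ` A"
  have E_mem: "S.cls a \<in> ?E" if "a \<in> A" for a
  proof -
    have "const_embed U A a \<in> ?E" using that by (rule imageI)
    then show ?thesis using S.const_embed_eq[OF that] by simp
  qed
  have E_cases: "\<exists>a\<in>A. X = S.cls a" if "X \<in> ?E" for X
  proof -
    from that obtain a where a: "a \<in> A" "X = const_embed U A a" by blast
    show ?thesis using a S.const_embed_eq[OF a(1)] by blast
  qed
  have cls_q: "S.cls a \<in> quot U A" if "a \<in> A" for a
    by (rule S.cls_quot[OF S.const_in_cls[OF that] S.A_bounded[OF that]])
  have mulE: "qmul U A (S.cls T) (S.cls a) = S.cls (T \<circ> a) \<and> T \<circ> a \<in> A
      \<and> qmul U A (S.cls a) (S.cls T) = S.cls (a \<circ> T) \<and> a \<circ> T \<in> A"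
    if Tb: "bounded_op T" and f: "f \<in> S.cls T" and a: "a \<in> A" for T f a
  proof -
    have fs: "f \<in> sfam U A" and fT: "S.SC f T" using f by (auto simp: S.cls_def)
    have ab: "bounded_op a" using a by (rule S.A_bounded)
    have ca: "(\<lambda>i. a) \<in> S.cls a" by (rule S.const_in_cls[OF a])
    have 1: "qmul U A (S.cls T) (S.cls a) = S.cls (T \<circ> a)" by (rule S.qmul_cls[OF f ca Tb ab])
    have 2: "qmul U A (S.cls a) (S.cls T) = S.cls (a \<circ> T)" by (rule S.qmul_cls[OF ca f ab Tb])
    have Ta: "T \<circ> a \<in> A" "a \<circ> T \<in> A" using S.lim_in_A[OF fs fT Tb a] by auto
    show ?thesis using 1 2 Ta by simp
  qed
  have i1: "?E \<subseteq> quot U A"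
  proof
    fix X assume "X \<in> ?E"
    then obtain a where a: "a \<in> A" "X = S.cls a" using E_cases by blast
    show "X \<in> quot U A" using cls_q[OF a(1)] a(2) by simp
  qed
  have i2: "qzero U A \<in> ?E"
  proof -
    have "qzero U A = const_embed U A op_zero" by (simp add: qzero_def const_embed_def)
    then show ?thesis using S.A_zero by (simp add: image_eqI)
  qed
  have i3: "\<forall>X\<in>?E. \<forall>Y\<in>?E. qadd U A X Y \<in> ?E"
  proof (intro ballI)
    fix X Y assume X: "X \<in> ?E" and Y: "Y \<in> ?E"
    obtain a where a: "a \<in> A" "X = S.cls a" using E_cases X by blast
    obtain b where b: "b \<in> A" "Y = S.cls b" using E_cases Y by blast
    have "qadd U A X Y = S.cls (op_add a b)"
      unfolding a(2) b(2) by (rule S.qadd_cls[OF S.const_in_cls[OF a(1)] S.const_in_cls[OF b(1)] S.A_bounded[OF a(1)] S.A_bounded[OF b(1)]])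
    then show "qadd U A X Y \<in> ?E" using E_mem[OF S.A_add[OF a(1) b(1)]] by simp
  qed
  have i4: "\<forall>c. \<forall>X\<in>?E. qscale U A c X \<in> ?E"
  proof (intro allI ballI)
    fix c X assume X: "X \<in> ?E"
    obtain a where a: "a \<in> A" "X = S.cls a" using E_cases X by blast
    have "qscale U A c X = S.cls (op_scale c a)"
      unfolding a(2) by (rule S.qscale_cls[OF S.const_in_cls[OF a(1)] S.A_bounded[OF a(1)]])
    then show "qscale U A c X \<in> ?E" using E_mem[OF S.A_scale[OF a(1)]] by simp
  qed
  have i5: "\<forall>X\<in>quot U A. \<forall>Y\<in>?E. qmul U A X Y \<in> ?E \<and> qmul U A Y X \<in> ?E"
  proof (intro ballI)
    fix X Y assume X: "X \<in> quot U A" and Y: "Y \<in> ?E"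
    obtain a where a: "a \<in> A" "Y = S.cls a" using E_cases Y by blast
    obtain T f where Tb: "bounded_op T" and f: "f \<in> S.cls T" and XT: "X = S.cls T"
      using S.quot_char[OF X] by blast
    have m: "qmul U A (S.cls T) (S.cls a) = S.cls (T \<circ> a) \<and> T \<circ> a \<in> A
      \<and> qmul U A (S.cls a) (S.cls T) = S.cls (a \<circ> T) \<and> a \<circ> T \<in> A" by (rule mulE[OF Tb f a(1)])
    have "qmul U A X Y \<in> ?E" unfolding XT a(2) using m E_mem[of "T \<circ> a"] by simp
    moreover have "qmul U A Y X \<in> ?E" unfolding XT a(2) using m E_mem[of "a \<circ> T"] by simp
    ultimately show "qmul U A X Y \<in> ?E \<and> qmul U A Y X \<in> ?E" ..
  qed
  have ideal: "qideal U A ?E"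
    unfolding qideal_def by (intro conjI i1 i2 i3 i4 i5)
  have closed: "qclosed U A ?E"
    unfolding qclosed_def
  proof (intro ballI impI)
    fix X assume X: "X \<in> quot U A" and H: "\<forall>e>0. \<exists>Y\<in>?E. qnorm U A (qdiff U A X Y) < e"
    obtain T f where Tb: "bounded_op T" and f: "f \<in> S.cls T" and XT: "X = S.cls T"
      using S.quot_char[OF X] by blast
    have fs: "f \<in> sfam U A" and fT: "S.SC f T" using f by (auto simp: S.cls_def)
    have "T \<in> A"
    proof (rule S.A_closed[OF Tb])
      fix e :: real assume e: "e > 0"
      obtain Y where Y: "Y \<in> ?E" and q: "qnorm U A (qdiff U A X Y) < e" using H e by blast
      obtain a where a: "a \<in> A" "Y = S.cls a" using E_cases Y by blast
      have ab: "bounded_op a" using a(1) by (rule S.A_bounded)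
      have ca: "(\<lambda>i. a) \<in> S.cls a" by (rule S.const_in_cls[OF a(1)])
      have cas: "(\<lambda>i. a) \<in> sfam U A" and caS: "S.SC (\<lambda>i. a) a" using ca by (auto simp: S.cls_def)
      define Z where "Z = S.cls (op_diff T a)"
      have QZ: "qdiff U A X Y = Z" unfolding XT a(2) Z_def by (rule S.qdiff_cls[OF f ca Tb ab])
      have dZ: "(\<lambda>i. op_diff (f i) a) \<in> Z"
        unfolding Z_def S.cls_def using S.sfam_diff[OF fs cas fT caS Tb ab] by simp
      have zZ: "qrep Z \<in> Z" unfolding Z_def by (rule S.qrep_in[OF dZ[unfolded Z_def]])
      have zs: "qrep Z \<in> sfam U A" and zS: "S.SC (qrep Z) (op_diff T a)" using zZ by (auto simp: Z_def S.cls_def)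
      have "(\<lambda>i. op_zero) \<in> jfam U A"
        unfolding S.jfam_char using S.sfam_const[OF S.A_zero] S.SC_const[of op_zero] by simp
      then have Jne: "jfam U A \<noteq> {}" by blast
      have "Inf ((\<lambda>n. Lim U (\<lambda>i. opnorm (op_diff (qrep Z i) (n i)))) ` jfam U A) < e"
        using q unfolding QZ qnorm_def .
      then obtain n where n: "n \<in> jfam U A" and nl: "Lim U (\<lambda>i. opnorm (op_diff (qrep Z i) (n i))) < e"
        using cInf_lessD[of "(\<lambda>n. Lim U (\<lambda>i. opnorm (op_diff (qrep Z i) (n i)))) ` jfam U A" e] Jne by blast
      have ns: "n \<in> sfam U A" and n0: "S.SC n op_zero" using n S.jfam_char by auto
      have dab: "bounded_op (op_diff T a)" by (rule bounded_op_diff[OF Tb ab])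
      define c where "c = (\<lambda>i. op_diff (qrep Z i) (n i))"
      have cs: "c \<in> sfam U A" unfolding c_def by (rule S.sfam_diff(1)[OF zs ns zS n0 dab bounded_op_zero])
      have cS0: "S.SC c (op_diff (op_diff T a) op_zero)" unfolding c_def by (rule S.sfam_diff(2)[OF zs ns zS n0 dab bounded_op_zero])
      have "op_diff (op_diff T a) op_zero = op_diff T a" by (rule ext) (simp add: op_diff_def op_zero_def)
      then have cS: "S.SC c (op_diff T a)" using cS0 by simp
      obtain M where M: "\<forall>i. opnorm (c i) \<le> M" using S.sfamD(2)[OF cs] by blast
      have cA: "\<And>i. c i \<in> A" using S.sfamD(1)[OF cs] .
      have bw: "\<And>i. opnorm (c i) \<in> {0..M}" using M opnorm_nonneg S.A_bounded[OF cA] by auto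
      obtain L where L: "((\<lambda>i. opnorm (c i)) \<longlongrightarrow> L) U" using ultra_limit[OF assms(1), of "\<lambda>i. opnorm (c i)" 0 M] bw by blast
      have "Lim U (\<lambda>i. opnorm (c i)) = L" by (rule tendsto_Lim[OF _ L]) (use S.Ubot in simp)
      then have Le: "L < e" using nl by (simp add: c_def)
      have "opnorm (op_diff T a) \<le> L" by (rule S.norm_lsc[OF cS cA dab L])
      then have "opnorm (op_diff T a) < e" using Le by linarith
      then show "\<exists>a\<in>A. opnorm (op_diff T a) < e" using a(1) by (intro bexI)
    qed
    then show "X \<in> ?E" using E_mem XT by simp
  qed
  have essential: "qessential U A ?E"
    unfolding qessential_def
  proof (intro allI impI)
    fix K assume K: "qideal U A K \<and> K \<noteq> {qzero U A}"
    have Kq: "K \<subseteq> quot U A" and K0: "qzero U A \<in> K"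
      and Km: "\<forall>X\<in>quot U A. \<forall>Y\<in>K. qmul U A X Y \<in> K \<and> qmul U A Y X \<in> K"
      using K unfolding qideal_def by auto
    obtain X where XK: "X \<in> K" and Xn: "X \<noteq> qzero U A" using K K0 by blast
    have X: "X \<in> quot U A" using Kq XK by blast
    obtain T f where Tb: "bounded_op T" and f: "f \<in> S.cls T" and XT: "X = S.cls T"
      using S.quot_char[OF X] by blast
    have "\<exists>a\<in>A. \<exists>v. T (a v) \<noteq> 0"
    proof (rule ccontr)
      assume "\<not> (\<exists>a\<in>A. \<exists>v. T (a v) \<noteq> 0)"
      then have "\<And>x v. x \<in> A \<Longrightarrow> T (x v) = 0" by blast
      then have "\<And>\<xi>. T \<xi> = 0" using S.nondeg_zero[OF Tb] by blast
      then have "T = op_zero" unfolding op_zero_def by (intro ext) simp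
      then have "X = qzero U A" using XT S.qzero_eq by simp
      then show False using Xn by simp
    qed
    then obtain a v where a: "a \<in> A" and av: "T (a v) \<noteq> 0" by blast
    have mm: "qmul U A (S.cls T) (S.cls a) = S.cls (T \<circ> a) \<and> T \<circ> a \<in> A
      \<and> qmul U A (S.cls a) (S.cls T) = S.cls (a \<circ> T) \<and> a \<circ> T \<in> A" by (rule mulE[OF Tb f a])
    have m2: "qmul U A X (S.cls a) = S.cls (T \<circ> a)" using mm XT by simp
    have m3: "T \<circ> a \<in> A" using mm by simp
    have m1: "qmul U A X (S.cls a) \<in> ?E" using m2 E_mem[OF m3] by simp
    have mK: "qmul U A X (S.cls a) \<in> K" using Km cls_q[OF a] XK by blast
    have mn: "qmul U A X (S.cls a) \<noteq> qzero U A"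
    proof
      assume "qmul U A X (S.cls a) = qzero U A"
      then have "S.cls (T \<circ> a) = S.cls op_zero" using m2 S.qzero_eq by simp
      then have "T \<circ> a = op_zero"
        by (rule S.cls_unique[OF S.const_in_cls[OF m3] S.const_in_cls[OF S.A_zero] S.A_bounded[OF m3] bounded_op_zero])
      then have "T (a v) = 0" by (metis comp_apply op_zero_def)
      then show False using av by simp
    qed
    show "K \<inter> ?E \<noteq> {qzero U A}" using mK m1 mn by blast
  qed
  show ?thesis using ideal closed essential by blast
qed


end
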